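(* Let $V$ be a Banach space, let $k:(X,\mathcal{A},p)\to(Y,\mathcal{B},q)$ be a measure-preserving Markov kernel, and let $n$ be a positive integer or $n=\infty$. For $g\in L^n(Y,\mathcal{B},q;V)$, the Bochner integral $x\mapsto k^*g(x):=\int_Y g(y)\,k(dy\mid x)$ is defined for $p$-a.a. $x$ and gives a well-defined element of $L^n(X,\mathcal{A},p;V)$. Moreover $k^*:L^n(Y,\mathcal{B},q;V)\to L^n(X,\mathcal{A},p;V)$ is linear and 1-Lipschitz, making $L^n(-;V)$ a functor $\mathsf{GKrn}^{\mathrm{op}}\to\mathsf{Ban}$.
   Context: Markov kernels, measure-preservation, and $\mathsf{GKrn}$ (probability spaces with a.s.-classes of measure-preserving kernels, composition $(\ell\circ k)(C\mid x)=\int\ell(C\mid y)k(dy\mid x)$) as usual. A function $f:X\to V$ is strongly measurable if it is Borel measurable with separable image. For finite $n$, $L^n(X,\mathcal{A},p;V)$ is the Banach space of a.s. classes of a.s. strongly measurable $f$ with $\int_X\|f(x)\|_V^n\,p(dx)<\infty$, with norm $(\int\|f\|_V^n\,dp)^{1/n}$; $L^\infty(X,\mathcal{A},p;V)$ is the space of a.s. classes of a.s. strongly measurable, essentially bounded $f$ with the essential supremum norm. Integrals of $V$-valued functions are Bochner integrals. *)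

theory Defs
  imports "HOL-Probability.Probability"
begin

definition separable_set :: "'v::metric_space set \<Rightarrow> bool" where
  "separable_set S \<longleftrightarrow> (\<exists>D. countable D \<and> D \<subseteq> S \<and> S \<subseteq> closure D)"

definition strongly_measurable :: "'a measure \<Rightarrow> ('a \<Rightarrow> 'v::real_normed_vector) \<Rightarrow> bool" where
  "strongly_measurable M f \<longleftrightarrow> f \<in> borel_measurable M \<and> separable_set (f ` space M)"

definition ae_strongly_measurable :: "'a measure \<Rightarrow> ('a \<Rightarrow> 'v::real_normed_vector) \<Rightarrow> bool" where
  "ae_strongly_measurable M f \<longleftrightarrow> (\<exists>g. strongly_measurable M g \<and> (AE x in M. f x = g x))"

definition Lnorm :: "'a measure \<Rightarrow> enat \<Rightarrow> ('a \<Rightarrow> 'v::real_normed_vector) \<Rightarrow> ennreal" where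
  "Lnorm M n f = (case n of
      enat m \<Rightarrow> (let I = (\<integral>\<^sup>+ x. ennreal (norm (f x) ^ m) \<partial>M) in
                 if I = \<infinity> then \<infinity> else ennreal (enn2real I powr (1 / real m)))
    | \<infinity> \<Rightarrow> Inf {C::ennreal. AE x in M. ennreal (norm (f x)) \<le> C})"

text \<open>Membership of (a representative of) a class in L^n(M;V).\<close>
definition Lmem :: "'a measure \<Rightarrow> enat \<Rightarrow> ('a \<Rightarrow> 'v::real_normed_vector) \<Rightarrow> bool" where
  "Lmem M n f \<longleftrightarrow> ae_strongly_measurable M f \<and> Lnorm M n f < \<infinity>"

text \<open>The library's has_bochner_integral requires second countability, so we repeat its
  definition (approximation in L^1 by simple integrable functions) with strong measurability.\<close>
definition has_bochner_int :: "'a measure \<Rightarrow> ('a \<Rightarrow> 'v::banach) \<Rightarrow> 'v \<Rightarrow> bool" where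
  "has_bochner_int M f v \<longleftrightarrow> strongly_measurable M f \<and>
     (\<exists>s. (\<forall>i. Bochner_Integration.simple_bochner_integrable M (s i)) \<and>
          (\<lambda>i. \<integral>\<^sup>+x. norm (f x - s i x) \<partial>M) \<longlonglongrightarrow> 0 \<and>
          (\<lambda>i. Bochner_Integration.simple_bochner_integral M (s i)) \<longlonglongrightarrow> v)"

definition bochner_integrable :: "'a measure \<Rightarrow> ('a \<Rightarrow> 'v::banach) \<Rightarrow> bool" where
  "bochner_integrable M f \<longleftrightarrow> (\<exists>v. has_bochner_int M f v)"

definition bochner_int :: "'a measure \<Rightarrow> ('a \<Rightarrow> 'v::banach) \<Rightarrow> 'v" where
  "bochner_int M f = (if bochner_integrable M f then (THE v. has_bochner_int M f v) else 0)"

definition kstar :: "('a \<Rightarrow> 'b measure) \<Rightarrow> ('b \<Rightarrow> 'v::banach) \<Rightarrow> 'a \<Rightarrow> 'v" where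
  "kstar k g x = bochner_int (k x) g"

definition mp_kernel :: "'a measure \<Rightarrow> 'b measure \<Rightarrow> ('a \<Rightarrow> 'b measure) \<Rightarrow> bool" where
  "mp_kernel p q k \<longleftrightarrow> prob_space p \<and> k \<in> p \<rightarrow>\<^sub>M prob_algebra q \<and> bind p k = q"

end

theory Submission
  imports Defs
begin

lemma sep_of_closure:
  fixes T :: "'v::metric_space set"
  assumes C: "countable C" and TC: "T \<subseteq> closure C"
  shows "separable_set T"
proof -
  define P where "P c n \<longleftrightarrow> (\<exists>t\<in>T. dist t c < inverse (real (Suc n)))" for c n
  define pk where "pk c n = (SOME t. t \<in> T \<and> dist t c < inverse (real (Suc n)))" for c n
  define D where "D = (\<lambda>(c,n). pk c n) ` {(c,n). c \<in> C \<and> P c n}"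
  have pk: "pk c n \<in> T \<and> dist (pk c n) c < inverse (real (Suc n))" if "P c n" for c n
    using that unfolding P_def pk_def by (metis (mono_tags, lifting) someI_ex)
  have "countable D"
  proof -
    have "countable (C \<times> (UNIV :: nat set))" using C by auto
    then have "countable {(c,n). c \<in> C \<and> P c n}" by (rule countable_subset[rotated]) auto
    then show ?thesis unfolding D_def by auto
  qed
  moreover have "D \<subseteq> T" using pk unfolding D_def by auto
  moreover have "T \<subseteq> closure D"
  proof
    fix t assume t: "t \<in> T"
    show "t \<in> closure D"
    proof (subst closure_approachable, intro allI impI)
      fix e :: real assume e: "e > 0"
      obtain n :: nat where n: "inverse (real (Suc n)) < e / 2"
        using reals_Archimedean[of "e/2"] e by auto
      have "t \<in> closure C" using t TC by auto
      moreover have "inverse (real (Suc n)) > 0" by simp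
      ultimately obtain c where c: "c \<in> C" "dist c t < inverse (real (Suc n))"
        unfolding closure_approachable by blast
      have Pc: "P c n" unfolding P_def using t c by (auto simp: dist_commute)
      have "pk c n \<in> D" unfolding D_def using c Pc by auto
      moreover have "dist (pk c n) t < e"
      proof -
        have "dist (pk c n) t \<le> dist (pk c n) c + dist c t" by (rule dist_triangle)
        also have "\<dots> < e" using pk[OF Pc] c n by linarith
        finally show ?thesis .
      qed
      ultimately show "\<exists>y\<in>D. dist y t < e" by auto
    qed
  qed
  ultimately show ?thesis unfolding separable_set_def by auto
qed

lemma separable_set_iff: "separable_set (T :: 'v::metric_space set) \<longleftrightarrow> (\<exists>C. countable C \<and> T \<subseteq> closure C)"
  using sep_of_closure unfolding separable_set_def by blast

lemma separable_set_subset: "separable_set (S :: 'v::metric_space set) \<Longrightarrow> T \<subseteq> S \<Longrightarrow> separable_set T"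
  unfolding separable_set_iff by blast

lemma sm_simple:
  assumes "simple_function M s"
  shows "strongly_measurable M (s :: _ \<Rightarrow> 'v::real_normed_vector)"
  unfolding strongly_measurable_def separable_set_iff
proof
  show "s \<in> borel_measurable M" using assms by (rule borel_measurable_simple_function)
  have "finite (s ` space M)" using assms by (simp add: simple_function_def)
  then show "\<exists>C. countable C \<and> s ` space M \<subseteq> closure C"
    by (intro exI[of _ "s ` space M"]) (auto intro: countable_finite closure_subset[THEN subsetD])
qed

lemma sm_limit:
  fixes f :: "nat \<Rightarrow> 'a \<Rightarrow> 'v::real_normed_vector"
  assumes f: "\<And>i. strongly_measurable M (f i)"
    and lim: "\<And>x. x \<in> space M \<Longrightarrow> (\<lambda>i. f i x) \<longlonglongrightarrow> g x"
  shows "strongly_measurable M g"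
  unfolding strongly_measurable_def
proof
  show "g \<in> borel_measurable M"
    using f by (rule_tac borel_measurable_LIMSEQ_metric[of f _ g]) (simp_all add: strongly_measurable_def lim)
  have "\<exists>C. countable C \<and> f i ` space M \<subseteq> closure C" for i
    using f[of i] by (simp add: strongly_measurable_def separable_set_iff)
  then have "\<forall>i. \<exists>C. countable C \<and> f i ` space M \<subseteq> closure C" by (rule allI)
  from choice[OF this] obtain C where C': "\<forall>i. countable (C i) \<and> f i ` space M \<subseteq> closure (C i)"
    by (rule exE)
  then have C: "\<And>i. countable (C i)" "\<And>i. f i ` space M \<subseteq> closure (C i)" by simp_all
  have "g ` space M \<subseteq> closure (\<Union>i. C i)"
  proof
    fix y assume "y \<in> g ` space M"
    then obtain x where x: "x \<in> space M" "y = g x" by auto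
    have "f i x \<in> closure (\<Union>i. C i)" for i
    proof -
      have "f i x \<in> closure (C i)" using C(2)[of i] x(1) by blast
      moreover have "closure (C i) \<subseteq> closure (\<Union>i. C i)" by (rule closure_mono) blast
      ultimately show ?thesis by blast
    qed
    then show "y \<in> closure (\<Union>i. C i)"
      using x(2) closed_sequentially[OF closed_closure _ lim[OF x(1)]] by blast
  qed
  moreover have "countable (\<Union>i. C i)" using C(1) by (intro countable_UN) auto
  ultimately show "separable_set (g ` space M)"
    unfolding separable_set_iff by blast
qed

lemma bm_cont_comp:
  assumes "f \<in> borel_measurable M" "continuous_on UNIV h"
  shows "(\<lambda>x. h (f x)) \<in> borel_measurable M"
  using measurable_compose[OF assms(1) borel_measurable_continuous_onI[OF assms(2)]] by (simp add: comp_def)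

lemma bm_dist_const:
  fixes f :: "'a \<Rightarrow> 'v::real_normed_vector"
  assumes "f \<in> borel_measurable M"
  shows "(\<lambda>x. dist (f x) c) \<in> borel_measurable M"
  by (rule bm_cont_comp[OF assms]) (intro continuous_intros)

lemma sm_approx:
  fixes f :: "'a \<Rightarrow> 'v::real_normed_vector"
  assumes sm: "strongly_measurable M f"
  obtains s where "\<And>i. simple_function M (s i)"
    "\<And>x. x \<in> space M \<Longrightarrow> (\<lambda>i. s i x) \<longlonglongrightarrow> f x"
    "\<And>i x. x \<in> space M \<Longrightarrow> norm (s i x) \<le> 2 * norm (f x)"
proof -
  have fm: "f \<in> borel_measurable M" using sm by (simp add: strongly_measurable_def)
  obtain D where D: "countable D" "D \<subseteq> f ` space M" "f ` space M \<subseteq> closure D"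
    using sm unfolding strongly_measurable_def separable_set_def by blast
  define e where "e j = (if j = 0 then 0 else from_nat_into D (j - 1))" for j :: nat
  have eD: "\<exists>j. e j = d" if dD: "d \<in> D" for d
  proof -
    obtain n where "from_nat_into D n = d" using from_nat_into_surj[OF D(1) dD] by blast
    then show ?thesis by (intro exI[of _ "Suc n"]) (simp add: e_def)
  qed
  define P where "P i x j \<longleftrightarrow> j \<le> i \<and> (\<forall>l. l \<le> i \<longrightarrow> dist (f x) (e j) \<le> dist (f x) (e l))" for i x j
  define idx where "idx i x = (LEAST j. P i x j)" for i x
  define s where "s i x = e (idx i x)" for i x
  have ex: "\<exists>j. P i x j" for i x
  proof -
    let ?S = "(\<lambda>l. dist (f x) (e l)) ` {..i}"
    have "Min ?S \<in> ?S" by (intro Min_in) auto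
    then obtain j where j: "j \<le> i" "dist (f x) (e j) = Min ?S"
      by (metis (no_types, lifting) atMost_iff imageE)
    have "\<forall>l. l \<le> i \<longrightarrow> dist (f x) (e j) \<le> dist (f x) (e l)"
      unfolding j(2) by (auto intro: Min_le)
    then show ?thesis using j(1) unfolding P_def by blast
  qed
  have Pidx: "P i x (idx i x)" for i x
    unfolding idx_def by (rule LeastI_ex[OF ex])
  have idx_meas: "idx i \<in> measurable M (count_space UNIV)" for i
  proof -
    have "Measurable.pred M (\<lambda>x. P i x j)" for j
    proof -
      have [measurable]: "(\<lambda>x. dist (f x) c) \<in> borel_measurable M" for c
        by (rule bm_dist_const[OF fm])
      show ?thesis unfolding P_def by measurable
    qed
    then show ?thesis unfolding idx_def by (rule measurable_Least)
  qed
  have simple: "simple_function M (s i)" for i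
    unfolding simple_function_eq_measurable
  proof
    have "s i ` space M \<subseteq> e ` {..i}" using Pidx unfolding s_def P_def by auto
    then show "finite (s i ` space M)" by (rule finite_subset) auto
    show "s i \<in> measurable M (count_space UNIV)"
      unfolding s_def by (rule measurable_compose[OF idx_meas]) simp
  qed
  have close: "dist (f x) (s i x) \<le> dist (f x) (e l)" if "l \<le> i" for i x l
    using Pidx[of i x] that unfolding s_def P_def by blast
  show ?thesis
  proof (rule that[OF simple])
    fix x assume x: "x \<in> space M"
    show "(\<lambda>i. s i x) \<longlonglongrightarrow> f x"
    proof (rule metric_LIMSEQ_I)
      fix r :: real assume r: "0 < r"
      have "f x \<in> closure D" using D(3) x by blast
      then obtain d where d: "d \<in> D" "dist d (f x) < r"
        using r unfolding closure_approachable by blast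
      obtain j where j: "e j = d" using eD[OF d(1)] by blast
      have "dist (s n x) (f x) < r" if "n \<ge> j" for n
        using close[OF that, of x] d(2) j by (simp add: dist_commute)
      then show "\<exists>no. \<forall>n\<ge>no. dist (s n x) (f x) < r" by blast
    qed
  next
    fix i x assume x: "x \<in> space M"
    have "dist (f x) (s i x) \<le> norm (f x)"
      using close[of 0 i x] by (simp add: e_def)
    then show "norm (s i x) \<le> 2 * norm (f x)"
      by (smt (verit) dist_norm norm_minus_commute norm_triangle_ineq2)
  qed
qed

lemma sm_binop:
  fixes f :: "'a \<Rightarrow> 'v::real_normed_vector" and g :: "'a \<Rightarrow> 'w::real_normed_vector"
    and h :: "'v \<Rightarrow> 'w \<Rightarrow> 'u::real_normed_vector"
  assumes f: "strongly_measurable M f" and g: "strongly_measurable M g"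
    and hc: "\<And>a b A B. a \<longlonglongrightarrow> A \<Longrightarrow> b \<longlonglongrightarrow> B \<Longrightarrow> (\<lambda>i. h (a i) (b i)) \<longlonglongrightarrow> h A B"
  shows "strongly_measurable M (\<lambda>x. h (f x) (g x))"
proof -
  obtain s where s: "\<And>i. simple_function M (s i)" "\<And>x. x \<in> space M \<Longrightarrow> (\<lambda>i. s i x) \<longlonglongrightarrow> f x"
    using sm_approx[OF f] by metis
  obtain t where t: "\<And>i. simple_function M (t i)" "\<And>x. x \<in> space M \<Longrightarrow> (\<lambda>i. t i x) \<longlonglongrightarrow> g x"
    using sm_approx[OF g] by metis
  show ?thesis
  proof (rule sm_limit)
    show "strongly_measurable M (\<lambda>x. h (s i x) (t i x))" for i
      by (rule sm_simple) (rule simple_function_compose2[OF s(1) t(1)])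
    show "(\<lambda>i. h (s i x) (t i x)) \<longlonglongrightarrow> h (f x) (g x)" if "x \<in> space M" for x
      by (rule hc[OF s(2)[OF that] t(2)[OF that]])
  qed
qed

lemma sm_const: "strongly_measurable M (\<lambda>x. c)"
  by (rule sm_simple) simp

lemma sm_add: "strongly_measurable M f \<Longrightarrow> strongly_measurable M g \<Longrightarrow>
    strongly_measurable M (\<lambda>x. f x + g x :: 'v::real_normed_vector)"
  by (rule sm_binop[where h="(+)"]) (auto intro: tendsto_add)

lemma sm_diff: "strongly_measurable M f \<Longrightarrow> strongly_measurable M g \<Longrightarrow>
    strongly_measurable M (\<lambda>x. f x - g x :: 'v::real_normed_vector)"
  by (rule sm_binop[where h="(-)"]) (auto intro: tendsto_diff)

lemma sm_scaleR: "strongly_measurable M (\<phi> :: _ \<Rightarrow> real) \<Longrightarrow> strongly_measurable M f \<Longrightarrow>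
    strongly_measurable M (\<lambda>x. \<phi> x *\<^sub>R f x :: 'v::real_normed_vector)"
  by (rule sm_binop[where h="(*\<^sub>R)"]) (auto intro: tendsto_scaleR)

lemma sm_scaleR_const: "strongly_measurable M f \<Longrightarrow>
    strongly_measurable M (\<lambda>x. c *\<^sub>R f x :: 'v::real_normed_vector)"
  using sm_scaleR[OF sm_const] by blast

lemma sm_real:
  assumes "\<phi> \<in> borel_measurable M"
  shows "strongly_measurable M (\<phi> :: _ \<Rightarrow> real)"
  unfolding strongly_measurable_def separable_set_iff
  using assms Rats_closure_real countable_rat by blast

lemma sm_bm: "strongly_measurable M f \<Longrightarrow> f \<in> borel_measurable M"
  by (simp add: strongly_measurable_def)

lemma sm_norm:
  assumes "strongly_measurable M (f :: _ \<Rightarrow> 'v::real_normed_vector)"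
  shows "(\<lambda>x. norm (f x)) \<in> borel_measurable M"
  by (rule bm_cont_comp[OF sm_bm[OF assms]]) (intro continuous_intros)

lemma sm_sum:
  assumes "finite I" "\<And>i. i \<in> I \<Longrightarrow> strongly_measurable M (f i)"
  shows "strongly_measurable M (\<lambda>x. \<Sum>i\<in>I. f i x :: 'v::real_normed_vector)"
  using assms by (induction I rule: finite_induct) (auto intro: sm_add sm_const)

lemma sm_cong_sets:
  fixes f :: "'a \<Rightarrow> 'v::real_normed_vector"
  assumes "sets N = sets M"
  shows "strongly_measurable N f \<longleftrightarrow> strongly_measurable M f"
proof -
  have "space N = space M" using assms by (rule sets_eq_imp_space_eq)
  then show ?thesis unfolding strongly_measurable_def using measurable_cong_sets[OF assms refl, of "borel :: 'v measure"] by simp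
qed

lemma sm_cong:
  assumes "strongly_measurable M f" "\<And>x. x \<in> space M \<Longrightarrow> f x = g x"
  shows "strongly_measurable M g"
proof -
  have "g ` space M = f ` space M" using assms(2) by auto
  moreover have "g \<in> borel_measurable M" using assms measurable_cong[of M f g] sm_bm by blast
  ultimately show ?thesis using assms(1) unfolding strongly_measurable_def by simp
qed

lemma sm_indicator_scaleR:
  assumes "A \<in> sets M" "strongly_measurable M f"
  shows "strongly_measurable M (\<lambda>x. indicator A x *\<^sub>R f x :: 'v::real_normed_vector)"
  by (rule sm_scaleR[OF sm_real assms(2)]) (use assms(1) in measurable)

lemma fm_sbi: "finite_measure M \<Longrightarrow> simple_function M s \<Longrightarrow> Bochner_Integration.simple_bochner_integrable M s"
  by (rule simple_bochner_integrable.intros) (auto simp: finite_measure.emeasure_finite)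

lemma sbi_simple: "Bochner_Integration.simple_bochner_integrable M s \<Longrightarrow> simple_function M s"
  by (auto elim: simple_bochner_integrable.cases)

lemma sm_sbi: "Bochner_Integration.simple_bochner_integrable M s \<Longrightarrow> strongly_measurable M (s :: _ \<Rightarrow> 'v::real_normed_vector)"
  by (rule sm_simple[OF sbi_simple])

lemma ennorm_meas:
  assumes "strongly_measurable M (f :: _ \<Rightarrow> 'v::real_normed_vector)"
  shows "(\<lambda>x. ennreal (norm (f x))) \<in> borel_measurable M"
  using sm_norm[OF assms] by measurable

lemma sbi_bounded':
  fixes f :: "'a \<Rightarrow> 'b::real_normed_vector"
  assumes f: "strongly_measurable M f"
  assumes s: "Bochner_Integration.simple_bochner_integrable M s" and t: "Bochner_Integration.simple_bochner_integrable M t"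
  shows "ennreal (norm (Bochner_Integration.simple_bochner_integral M s - Bochner_Integration.simple_bochner_integral M t)) \<le>
    (\<integral>\<^sup>+ x. norm (f x - s x) \<partial>M) + (\<integral>\<^sup>+ x. norm (f x - t x) \<partial>M)"
    (is "ennreal (norm (?s - ?t)) \<le> ?S + ?T")
proof -
  have m1: "(\<lambda>x. ennreal (norm (f x - s x))) \<in> borel_measurable M"
    by (rule ennorm_meas[OF sm_diff[OF f sm_sbi[OF s]]])
  have m2: "(\<lambda>x. ennreal (norm (f x - t x))) \<in> borel_measurable M"
    by (rule ennorm_meas[OF sm_diff[OF f sm_sbi[OF t]]])
  have "ennreal (norm (?s - ?t)) = norm (Bochner_Integration.simple_bochner_integral M (\<lambda>x. s x - t x))"
    using s t by (subst simple_bochner_integral_diff) auto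
  also have "\<dots> \<le> Bochner_Integration.simple_bochner_integral M (\<lambda>x. norm (s x - t x))"
    using simple_bochner_integrable_compose2[of "(-)" M "s" "t"] s t
    by (auto intro!: simple_bochner_integral_norm_bound)
  also have "\<dots> = (\<integral>\<^sup>+x. norm (s x - t x) \<partial>M)"
    using simple_bochner_integrable_compose2[of "\<lambda>x y. norm (x - y)" M "s" "t"] s t
    by (auto intro!: simple_bochner_integral_eq_nn_integral)
  also have "\<dots> \<le> (\<integral>\<^sup>+x. ennreal (norm (f x - s x)) + ennreal (norm (f x - t x)) \<partial>M)"
  proof -
    have "\<And>x. x \<in> space M \<Longrightarrow>
         norm (s x - t x) \<le> norm (f x - s x) + norm (f x - t x)"
      by (metis dual_order.refl norm_diff_triangle_le norm_minus_commute)
    then show ?thesis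
      by (metis (mono_tags, lifting) ennreal_leI ennreal_plus nn_integral_mono norm_ge_zero)
  qed
  also have "\<dots> = ?S + ?T"
   by (rule nn_integral_add[OF m1 m2])
  finally show ?thesis .
qed

lemma hbi_sm: "has_bochner_int M f v \<Longrightarrow> strongly_measurable M f"
  by (simp add: has_bochner_int_def)

lemma hbi_unique:
  fixes f :: "'a \<Rightarrow> 'b::banach"
  assumes "has_bochner_int M f x" "has_bochner_int M f y"
  shows "x = y"
proof -
  have f: "strongly_measurable M f" using assms(1) by (rule hbi_sm)
  obtain s where s: "\<And>i. Bochner_Integration.simple_bochner_integrable M (s i)"
    and S: "(\<lambda>i. \<integral>\<^sup>+ x. norm (f x - s i x) \<partial>M) \<longlonglongrightarrow> 0"
    and sx: "(\<lambda>i. Bochner_Integration.simple_bochner_integral M (s i)) \<longlonglongrightarrow> x"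
    using assms(1) unfolding has_bochner_int_def by blast
  obtain t where t: "\<And>i. Bochner_Integration.simple_bochner_integrable M (t i)"
    and T: "(\<lambda>i. \<integral>\<^sup>+ x. norm (f x - t i x) \<partial>M) \<longlonglongrightarrow> 0"
    and ty: "(\<lambda>i. Bochner_Integration.simple_bochner_integral M (t i)) \<longlonglongrightarrow> y"
    using assms(2) unfolding has_bochner_int_def by blast
  let ?s = "\<lambda>i. Bochner_Integration.simple_bochner_integral M (s i)"
  let ?t = "\<lambda>i. Bochner_Integration.simple_bochner_integral M (t i)"
  let ?S = "\<lambda>i. \<integral>\<^sup>+ x. norm (f x - s i x) \<partial>M"
  let ?T = "\<lambda>i. \<integral>\<^sup>+ x. norm (f x - t i x) \<partial>M"
  have "(\<lambda>i. norm (?s i - ?t i)) \<longlonglongrightarrow> norm (x - y)"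
    using sx ty by (intro tendsto_intros)
  moreover
  have "(\<lambda>i. ennreal (norm (?s i - ?t i))) \<longlonglongrightarrow> ennreal 0"
  proof (rule tendsto_sandwich)
    show "eventually (\<lambda>i. 0 \<le> ennreal (norm (?s i - ?t i))) sequentially" "(\<lambda>_. 0) \<longlonglongrightarrow> ennreal 0"
      by auto
    show "eventually (\<lambda>i. norm (?s i - ?t i) \<le> ?S i + ?T i) sequentially"
      by (intro always_eventually allI sbi_bounded' s t f)
    show "(\<lambda>i. ?S i + ?T i) \<longlonglongrightarrow> ennreal 0"
      using tendsto_add[OF S T] by simp
  qed
  then have "(\<lambda>i. norm (?s i - ?t i)) \<longlonglongrightarrow> 0"
    by (simp flip: ennreal_0)
  ultimately have "norm (x - y) = 0"
    by (rule LIMSEQ_unique)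
  then show "x = y" by simp
qed

lemma hbi_int: "has_bochner_int M f v \<Longrightarrow> bochner_int M f = v"
  unfolding bochner_int_def bochner_integrable_def
  using hbi_unique by (metis (mono_tags, lifting) the_equality)

lemma hbi_norm:
  fixes f :: "'a \<Rightarrow> 'b::banach"
  assumes i: "has_bochner_int M f x"
  shows "ennreal (norm x) \<le> (\<integral>\<^sup>+x. norm (f x) \<partial>M)"
proof -
  have f: "strongly_measurable M f" using assms(1) by (rule hbi_sm)
  obtain s where s: "\<And>i. Bochner_Integration.simple_bochner_integrable M (s i)"
    and lim: "(\<lambda>i. \<integral>\<^sup>+ x. norm (f x - s i x) \<partial>M) \<longlonglongrightarrow> 0"
    and x: "(\<lambda>i. Bochner_Integration.simple_bochner_integral M (s i)) \<longlonglongrightarrow> x"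
    using assms(1) unfolding has_bochner_int_def by blast
  let ?s = "\<lambda>i. Bochner_Integration.simple_bochner_integral M (s i)"
  have mf: "(\<lambda>x. ennreal (norm (f x))) \<in> borel_measurable M" by (rule ennorm_meas[OF f])
  have md: "(\<lambda>x. ennreal (norm (f x - s i x))) \<in> borel_measurable M" for i
    by (rule ennorm_meas[OF sm_diff[OF f sm_sbi[OF s]]])
  show "norm x \<le> (\<integral>\<^sup>+x. norm (f x) \<partial>M)"
  proof (rule LIMSEQ_le)
    show "(\<lambda>i. ennreal (norm (?s i))) \<longlonglongrightarrow> norm x"
      using x by (auto simp: tendsto_ennreal_iff intro: tendsto_intros)
    let ?t = "\<lambda>n. (\<integral>\<^sup>+x. norm (f x - s n x) \<partial>M) + (\<integral>\<^sup>+x. norm (f x) \<partial>M)"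
    show "\<exists>N. \<forall>n\<ge>N. norm (?s n) \<le> ?t n"
    proof (intro exI allI impI)
      fix n
      have "ennreal (norm (?s n)) \<le> Bochner_Integration.simple_bochner_integral M (\<lambda>x. norm (s n x))"
        by (auto intro!: simple_bochner_integral_norm_bound s)
      also have "\<dots> = (\<integral>\<^sup>+x. norm (s n x) \<partial>M)"
        by (intro simple_bochner_integral_eq_nn_integral)
           (auto intro: s simple_bochner_integrable_compose2)
      also have "\<dots> \<le> (\<integral>\<^sup>+x. ennreal (norm (f x - s n x)) + norm (f x) \<partial>M)"
        by (auto intro!: nn_integral_mono simp flip: ennreal_plus)
           (metis add.commute norm_minus_commute norm_triangle_sub)
      also have "\<dots> = ?t n"
        by (rule nn_integral_add[OF md mf])
      finally show "norm (?s n) \<le> ?t n" .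
    qed
    have "?t \<longlonglongrightarrow> 0 + (\<integral>\<^sup>+ x. ennreal (norm (f x)) \<partial>M)"
      by (intro tendsto_add tendsto_const lim)
    then show "?t \<longlonglongrightarrow> \<integral>\<^sup>+ x. ennreal (norm (f x)) \<partial>M"
      by simp
  qed
qed

abbreviation "SBI \<equiv> Bochner_Integration.simple_bochner_integrable"
abbreviation "SBINT \<equiv> Bochner_Integration.simple_bochner_integral"

lemma hbiI:
  assumes "strongly_measurable M f" "\<And>i. SBI M (s i)"
    "(\<lambda>i. \<integral>\<^sup>+x. norm (f x - s i x) \<partial>M) \<longlonglongrightarrow> 0" "(\<lambda>i. SBINT M (s i)) \<longlonglongrightarrow> v"
  shows "has_bochner_int M f v"
  using assms unfolding has_bochner_int_def by blast

lemma hbi_exists: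
  fixes f :: "'a \<Rightarrow> 'b::banach"
  assumes fm: "finite_measure M" and f: "strongly_measurable M f"
    and fin: "(\<integral>\<^sup>+x. norm (f x) \<partial>M) < \<infinity>"
  shows "\<exists>v. has_bochner_int M f v"
proof -
  obtain s where s: "\<And>i. simple_function M (s i)"
    "\<And>x. x \<in> space M \<Longrightarrow> (\<lambda>i. s i x) \<longlonglongrightarrow> f x"
    "\<And>i x. x \<in> space M \<Longrightarrow> norm (s i x) \<le> 2 * norm (f x)"
    using sm_approx[OF f] by metis
  have sbi: "SBI M (s i)" for i by (rule fm_sbi[OF fm s(1)])
  have nf[measurable]: "(\<lambda>x. norm (f x)) \<in> borel_measurable M" by (rule sm_norm[OF f])
  have nd[measurable]: "(\<lambda>x. norm (s i x - f x)) \<in> borel_measurable M" for i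
    by (rule sm_norm[OF sm_diff[OF sm_sbi[OF sbi] f]])
  have fin3: "(\<integral>\<^sup>+x. ennreal (3 * norm (f x)) \<partial>M) < \<infinity>"
  proof -
    have "(\<integral>\<^sup>+x. ennreal (3 * norm (f x)) \<partial>M) = 3 * (\<integral>\<^sup>+x. norm (f x) \<partial>M)"
      by (subst ennreal_mult) (auto intro!: nn_integral_cmult)
    then show ?thesis using fin by (simp add: ennreal_mult_less_top)
  qed
  have L: "(\<lambda>i. \<integral>\<^sup>+x. norm (0 - norm (s i x - f x)) \<partial>M) \<longlonglongrightarrow> 0"
  proof (rule nn_integral_dominated_convergence_norm[where w="\<lambda>x. 3 * norm (f x)"])
    show "AE x in M. norm (norm (s i x - f x)) \<le> 3 * norm (f x)" for i
    proof (rule AE_I2)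
      fix x assume x: "x \<in> space M"
      have "norm (s i x - f x) \<le> norm (s i x) + norm (f x)" by (rule norm_triangle_ineq4)
      then show "norm (norm (s i x - f x)) \<le> 3 * norm (f x)" using s(3)[OF x, of i] by simp
    qed
    show "AE x in M. (\<lambda>i. norm (s i x - f x)) \<longlonglongrightarrow> 0"
    proof (rule AE_I2)
      fix x assume x: "x \<in> space M"
      show "(\<lambda>i. norm (s i x - f x)) \<longlonglongrightarrow> 0"
        using s(2)[OF x] by (simp add: tendsto_norm_zero_iff LIM_zero)
    qed
  qed (use fin3 in auto)
  have L': "(\<lambda>i. \<integral>\<^sup>+x. norm (f x - s i x) \<partial>M) \<longlonglongrightarrow> 0"
    using L by (simp add: norm_minus_commute)
  define a where "a i = enn2real (\<integral>\<^sup>+x. norm (f x - s i x) \<partial>M)" for i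
  have afin: "(\<integral>\<^sup>+x. norm (f x - s i x) \<partial>M) = ennreal (a i)" for i
  proof -
    have "(\<integral>\<^sup>+x. norm (f x - s i x) \<partial>M) \<le> (\<integral>\<^sup>+x. ennreal (3 * norm (f x)) \<partial>M)"
    proof (rule nn_integral_mono)
      fix x assume x: "x \<in> space M"
      have "norm (f x - s i x) \<le> norm (f x) + norm (s i x)" by (rule norm_triangle_ineq4)
      then show "ennreal (norm (f x - s i x)) \<le> ennreal (3 * norm (f x))" using s(3)[OF x, of i]
        by (intro ennreal_leI) simp
    qed
    then have "(\<integral>\<^sup>+x. norm (f x - s i x) \<partial>M) < \<infinity>" using fin3 by (rule le_less_trans)
    then show ?thesis unfolding a_def by (simp add: less_top)
  qed
  have a0: "a \<longlonglongrightarrow> 0"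
  proof -
    have L0: "(\<lambda>i. \<integral>\<^sup>+x. norm (f x - s i x) \<partial>M) \<longlonglongrightarrow> ennreal 0" using L' by simp
    have "(\<lambda>i. enn2real (\<integral>\<^sup>+x. norm (f x - s i x) \<partial>M)) \<longlonglongrightarrow> 0"
      by (rule tendsto_enn2real[OF L0]) simp
    then show ?thesis unfolding a_def by simp
  qed
  have ab: "norm (SBINT M (s i) - SBINT M (s j)) \<le> a i + a j" for i j
  proof -
    have "ennreal (norm (SBINT M (s i) - SBINT M (s j))) \<le> ennreal (a i) + ennreal (a j)"
      using sbi_bounded'[OF f sbi sbi] unfolding afin .
    then show ?thesis
      by (metis a_def enn2real_nonneg ennreal_le_iff ennreal_plus add_nonneg_nonneg)
  qed
  have "Cauchy (\<lambda>i. SBINT M (s i))"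
  proof (rule metric_CauchyI)
    fix e :: real assume e: "0 < e"
    obtain N where N: "\<And>n. n \<ge> N \<Longrightarrow> a n < e / 2"
      using order_tendstoD(2)[OF a0, of "e/2"] e by (auto simp: eventually_sequentially)
    have "dist (SBINT M (s m)) (SBINT M (s n)) < e" if "m \<ge> N" "n \<ge> N" for m n
      using ab[of m n] N[OF that(1)] N[OF that(2)] by (simp add: dist_norm)
    then show "\<exists>K. \<forall>m\<ge>K. \<forall>n\<ge>K. dist (SBINT M (s m)) (SBINT M (s n)) < e" by blast
  qed
  then obtain v where "(\<lambda>i. SBINT M (s i)) \<longlonglongrightarrow> v"
    using Cauchy_convergent_iff convergent_def by blast
  then have "has_bochner_int M f v" using f sbi L' by (intro hbiI)
  then show ?thesis by blast
qed

lemma hbi_add: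
  fixes f g :: "'a \<Rightarrow> 'b::banach"
  assumes "has_bochner_int M f v" "has_bochner_int M g w"
  shows "has_bochner_int M (\<lambda>x. f x + g x) (v + w)"
proof -
  have f: "strongly_measurable M f" using assms(1) by (rule hbi_sm)
  have g: "strongly_measurable M g" using assms(2) by (rule hbi_sm)
  obtain s where s: "\<And>i. SBI M (s i)"
    and S: "(\<lambda>i. \<integral>\<^sup>+ x. norm (f x - s i x) \<partial>M) \<longlonglongrightarrow> 0"
    and sx: "(\<lambda>i. SBINT M (s i)) \<longlonglongrightarrow> v"
    using assms(1) unfolding has_bochner_int_def by blast
  obtain t where t: "\<And>i. SBI M (t i)"
    and T: "(\<lambda>i. \<integral>\<^sup>+ x. norm (g x - t i x) \<partial>M) \<longlonglongrightarrow> 0"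
    and ty: "(\<lambda>i. SBINT M (t i)) \<longlonglongrightarrow> w"
    using assms(2) unfolding has_bochner_int_def by blast
  show ?thesis
  proof (rule hbiI)
    show "strongly_measurable M (\<lambda>x. f x + g x)" by (rule sm_add[OF f g])
    show st: "SBI M (\<lambda>x. s i x + t i x)" for i
      using simple_bochner_integrable_compose2[of "(+)" M "s i" "t i"] s t by auto
    show "(\<lambda>i. SBINT M (\<lambda>x. s i x + t i x)) \<longlonglongrightarrow> v + w"
      using tendsto_add[OF sx ty] by (simp add: simple_bochner_integral_add[OF s t])
    show "(\<lambda>i. \<integral>\<^sup>+ x. norm (f x + g x - (s i x + t i x)) \<partial>M) \<longlonglongrightarrow> 0"
    proof (rule tendsto_sandwich)
      show "eventually (\<lambda>i. 0 \<le> (\<integral>\<^sup>+ x. norm (f x + g x - (s i x + t i x)) \<partial>M)) sequentially"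
        by auto
      show "(\<lambda>_. 0 :: ennreal) \<longlonglongrightarrow> 0" by simp
      have m1: "(\<lambda>x. ennreal (norm (f x - s i x))) \<in> borel_measurable M" for i
        by (rule ennorm_meas[OF sm_diff[OF f sm_sbi[OF s]]])
      have m2: "(\<lambda>x. ennreal (norm (g x - t i x))) \<in> borel_measurable M" for i
        by (rule ennorm_meas[OF sm_diff[OF g sm_sbi[OF t]]])
      have "(\<integral>\<^sup>+ x. norm (f x + g x - (s i x + t i x)) \<partial>M) \<le>
          (\<integral>\<^sup>+ x. ennreal (norm (f x - s i x)) + ennreal (norm (g x - t i x)) \<partial>M)" for i
      proof (rule nn_integral_mono)
        fix x
        have "norm (f x + g x - (s i x + t i x)) \<le> norm (f x - s i x) + norm (g x - t i x)"
          by (metis add_diff_add norm_triangle_ineq)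
        then show "ennreal (norm (f x + g x - (s i x + t i x))) \<le>
            ennreal (norm (f x - s i x)) + ennreal (norm (g x - t i x))"
          by (simp add: ennreal_plus[symmetric] del: ennreal_plus)
      qed
      also have "(\<integral>\<^sup>+ x. ennreal (norm (f x - s i x)) + ennreal (norm (g x - t i x)) \<partial>M) =
          (\<integral>\<^sup>+ x. norm (f x - s i x) \<partial>M) + (\<integral>\<^sup>+ x. norm (g x - t i x) \<partial>M)" for i
        by (rule nn_integral_add[OF m1 m2])
      finally show "eventually (\<lambda>i. (\<integral>\<^sup>+ x. norm (f x + g x - (s i x + t i x)) \<partial>M) \<le>
          (\<integral>\<^sup>+ x. norm (f x - s i x) \<partial>M) + (\<integral>\<^sup>+ x. norm (g x - t i x) \<partial>M)) sequentially"
        by (intro always_eventually allI)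
      show "(\<lambda>i. (\<integral>\<^sup>+ x. norm (f x - s i x) \<partial>M) + (\<integral>\<^sup>+ x. norm (g x - t i x) \<partial>M)) \<longlonglongrightarrow> 0"
        using tendsto_add[OF S T] by simp
    qed
  qed
qed

lemma hbi_scaleR:
  fixes f :: "'a \<Rightarrow> 'b::banach"
  assumes "has_bochner_int M f v"
  shows "has_bochner_int M (\<lambda>x. c *\<^sub>R f x) (c *\<^sub>R v)"
proof -
  have f: "strongly_measurable M f" using assms(1) by (rule hbi_sm)
  obtain s where s: "\<And>i. SBI M (s i)"
    and S: "(\<lambda>i. \<integral>\<^sup>+ x. norm (f x - s i x) \<partial>M) \<longlonglongrightarrow> 0"
    and sx: "(\<lambda>i. SBINT M (s i)) \<longlonglongrightarrow> v"
    using assms(1) unfolding has_bochner_int_def by blast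
  show ?thesis
  proof (rule hbiI)
    show "strongly_measurable M (\<lambda>x. c *\<^sub>R f x)" by (rule sm_scaleR_const[OF f])
    show "SBI M (\<lambda>x. c *\<^sub>R s i x)" for i
      using simple_bochner_integrable_compose2[of "\<lambda>a b. c *\<^sub>R a" M "s i" "s i"] s by auto
    have "SBINT M (\<lambda>x. c *\<^sub>R s i x) = c *\<^sub>R SBINT M (s i)" for i
      by (rule simple_bochner_integral_linear[OF _ s]) (simp add: bounded_linear.linear[OF bounded_linear_scaleR_right])
    then show "(\<lambda>i. SBINT M (\<lambda>x. c *\<^sub>R s i x)) \<longlonglongrightarrow> c *\<^sub>R v"
      using tendsto_scaleR[OF tendsto_const sx] by simp
    have m1: "(\<lambda>x. ennreal (norm (f x - s i x))) \<in> borel_measurable M" for i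
      by (rule ennorm_meas[OF sm_diff[OF f sm_sbi[OF s]]])
    have "(\<integral>\<^sup>+ x. norm (c *\<^sub>R f x - c *\<^sub>R s i x) \<partial>M) = ennreal \<bar>c\<bar> * (\<integral>\<^sup>+ x. norm (f x - s i x) \<partial>M)" for i
    proof -
      have "(\<integral>\<^sup>+ x. norm (c *\<^sub>R f x - c *\<^sub>R s i x) \<partial>M) = (\<integral>\<^sup>+ x. ennreal \<bar>c\<bar> * ennreal (norm (f x - s i x)) \<partial>M)"
        by (intro nn_integral_cong) (simp add: ennreal_mult[symmetric] scaleR_diff_right[symmetric] del: scaleR_diff_right)
      also have "\<dots> = ennreal \<bar>c\<bar> * (\<integral>\<^sup>+ x. norm (f x - s i x) \<partial>M)"
        by (rule nn_integral_cmult[OF m1])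
      finally show ?thesis .
    qed
    moreover have "(\<lambda>i. ennreal \<bar>c\<bar> * (\<integral>\<^sup>+ x. norm (f x - s i x) \<partial>M)) \<longlonglongrightarrow> ennreal \<bar>c\<bar> * 0"
      by (rule ennreal_tendsto_cmult[OF _ S]) simp
    ultimately show "(\<lambda>i. \<integral>\<^sup>+ x. norm (c *\<^sub>R f x - c *\<^sub>R s i x) \<partial>M) \<longlonglongrightarrow> 0" by simp
  qed
qed

lemma hbi_diff:
  fixes f g :: "'a \<Rightarrow> 'b::banach"
  assumes "has_bochner_int M f v" "has_bochner_int M g w"
  shows "has_bochner_int M (\<lambda>x. f x - g x) (v - w)"
  using hbi_add[OF assms(1) hbi_scaleR[OF assms(2), of "-1"]] by simp

lemma hbi_lin:
  fixes f g :: "'a \<Rightarrow> 'b::banach"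
  assumes "has_bochner_int M f v" "has_bochner_int M g w"
  shows "has_bochner_int M (\<lambda>x. a *\<^sub>R f x + b *\<^sub>R g x) (a *\<^sub>R v + b *\<^sub>R w)"
  by (rule hbi_add[OF hbi_scaleR[OF assms(1)] hbi_scaleR[OF assms(2)]])

lemma hbi_zero: "finite_measure M \<Longrightarrow> has_bochner_int M (\<lambda>x. 0 :: 'b::banach) 0"
  by (rule hbiI[where s="\<lambda>i x. 0"]) (auto intro: sm_const fm_sbi simp: simple_bochner_integral_def image_constant_conv)

lemma hbi_sum:
  fixes f :: "'i \<Rightarrow> 'a \<Rightarrow> 'b::banach"
  assumes "finite_measure M" "finite I" "\<And>i. i \<in> I \<Longrightarrow> has_bochner_int M (f i) (v i)"
  shows "has_bochner_int M (\<lambda>x. \<Sum>i\<in>I. f i x) (\<Sum>i\<in>I. v i)"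
  using assms(2,3)
proof (induction I rule: finite_induct)
  case empty then show ?case using hbi_zero[OF assms(1)] by simp
next
  case (insert j I)
  then show ?case using hbi_add[of M "f j" "v j" "\<lambda>x. \<Sum>i\<in>I. f i x"] by simp
qed

lemma hbi_cong_AE:
  assumes "has_bochner_int M f v" "strongly_measurable M g" "AE x in M. f x = g x"
  shows "has_bochner_int M g v"
proof -
  obtain s where s: "\<And>i. SBI M (s i)"
    and S: "(\<lambda>i. \<integral>\<^sup>+ x. norm (f x - s i x) \<partial>M) \<longlonglongrightarrow> 0"
    and sx: "(\<lambda>i. SBINT M (s i)) \<longlonglongrightarrow> v"
    using assms(1) unfolding has_bochner_int_def by blast
  have "(\<integral>\<^sup>+ x. norm (f x - s i x) \<partial>M) = (\<integral>\<^sup>+ x. norm (g x - s i x) \<partial>M)" for i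
    by (rule nn_integral_cong_AE) (use assms(3) in auto)
  then show ?thesis using assms(2) s S sx by (intro hbiI[of M g s]) auto
qed

lemma hbi_simple:
  assumes "finite_measure M" "simple_function M s"
  shows "has_bochner_int M (s :: _ \<Rightarrow> 'b::banach) (SBINT M s)"
  by (rule hbiI[where s="\<lambda>i. s"]) (auto intro: sm_simple fm_sbi assms)

lemma hbi_dct:
  fixes F :: "nat \<Rightarrow> 'a \<Rightarrow> 'b::banach" and w :: "'a \<Rightarrow> real"
  assumes fm: "finite_measure M" and f: "strongly_measurable M f"
    and F: "\<And>i. has_bochner_int M (F i) (v i)"
    and lim: "AE x in M. (\<lambda>i. F i x) \<longlonglongrightarrow> f x"
    and wm: "w \<in> borel_measurable M" and wfin: "(\<integral>\<^sup>+ x. ennreal (w x) \<partial>M) < \<infinity>"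
    and bnd: "\<And>i. AE x in M. norm (F i x) \<le> w x"
  shows "\<exists>v'. has_bochner_int M f v' \<and> v \<longlonglongrightarrow> v'"
proof -
  have bnd': "AE x in M. \<forall>i. norm (F i x) \<le> w x"
    unfolding AE_all_countable using bnd by blast
  have fb: "AE x in M. norm (f x) \<le> w x"
    using bnd' lim
  proof eventually_elim
    case (elim x)
    show ?case
      by (rule LIMSEQ_le_const2[OF tendsto_norm[OF elim(2)]]) (use elim(1) in auto)
  qed
  have "(\<integral>\<^sup>+ x. norm (f x) \<partial>M) \<le> (\<integral>\<^sup>+ x. ennreal (w x) \<partial>M)"
    using fb by (intro nn_integral_mono_AE) (auto intro: ennreal_leI)
  then have "(\<integral>\<^sup>+ x. norm (f x) \<partial>M) < \<infinity>" using wfin by (rule le_less_trans)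
  then obtain v' where v': "has_bochner_int M f v'" using hbi_exists[OF fm f] by blast
  have D: "has_bochner_int M (\<lambda>x. F i x - f x) (v i - v')" for i
    by (rule hbi_diff[OF F v'])
  have Fs: "strongly_measurable M (F i)" for i using F by (rule hbi_sm)
  have um[measurable]: "(\<lambda>x. norm (F i x - f x)) \<in> borel_measurable M" for i
    by (rule sm_norm[OF sm_diff[OF Fs f]])
  have L: "(\<lambda>i. \<integral>\<^sup>+x. norm (0 - norm (F i x - f x)) \<partial>M) \<longlonglongrightarrow> 0"
  proof (rule nn_integral_dominated_convergence_norm[where w="\<lambda>x. 2 * w x"])
    show "AE x in M. norm (norm (F i x - f x)) \<le> 2 * w x" for i
      using bnd' fb
    proof eventually_elim
      case (elim x)
      have "norm (F i x - f x) \<le> norm (F i x) + norm (f x)" by (rule norm_triangle_ineq4)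
      then show ?case using elim(1)[rule_format, of i] elim(2) by simp
    qed
    show "AE x in M. (\<lambda>i. norm (F i x - f x)) \<longlonglongrightarrow> 0"
      using lim
    proof eventually_elim
      case (elim x)
      then show ?case by (simp add: tendsto_norm_zero_iff LIM_zero)
    qed
    have "(\<integral>\<^sup>+ x. ennreal (2 * w x) \<partial>M) = 2 * (\<integral>\<^sup>+ x. ennreal (w x) \<partial>M)"
      using wm by (subst nn_integral_cmult[symmetric]) (auto simp: ennreal_mult')
    then show "(\<integral>\<^sup>+ x. ennreal (2 * w x) \<partial>M) < \<infinity>"
      using wfin by (simp add: ennreal_mult_less_top)
  qed (use wm in auto)
  have L': "(\<lambda>i. \<integral>\<^sup>+x. norm (F i x - f x) \<partial>M) \<longlonglongrightarrow> 0"
    using L by simp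
  have "(\<lambda>i. ennreal (norm (v i - v'))) \<longlonglongrightarrow> ennreal 0"
  proof (rule tendsto_sandwich)
    show "eventually (\<lambda>i. 0 \<le> ennreal (norm (v i - v'))) sequentially" "(\<lambda>_. 0) \<longlonglongrightarrow> ennreal 0"
      by auto
    show "eventually (\<lambda>i. ennreal (norm (v i - v')) \<le> (\<integral>\<^sup>+x. norm (F i x - f x) \<partial>M)) sequentially"
      by (intro always_eventually allI hbi_norm[OF D])
    show "(\<lambda>i. \<integral>\<^sup>+x. norm (F i x - f x) \<partial>M) \<longlonglongrightarrow> ennreal 0"
      using L' by simp
  qed
  then have "(\<lambda>i. norm (v i - v')) \<longlonglongrightarrow> 0"
    by (simp flip: ennreal_0)
  then have "v \<longlonglongrightarrow> v'"
    by (simp add: tendsto_norm_zero_iff LIM_zero_cancel)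
  then show ?thesis using v' by blast
qed

lemma hbi_real_vec:
  fixes \<phi> :: "'a \<Rightarrow> real" and d :: "'b::banach"
  assumes "has_bochner_integral M \<phi> I"
  shows "has_bochner_int M (\<lambda>x. \<phi> x *\<^sub>R d) (I *\<^sub>R d)"
proof -
  obtain s where phim[measurable]: "\<phi> \<in> borel_measurable M" and s: "\<And>i. SBI M (s i)"
    and S: "(\<lambda>i. \<integral>\<^sup>+ x. norm (\<phi> x - s i x) \<partial>M) \<longlonglongrightarrow> 0"
    and sx: "(\<lambda>i. SBINT M (s i)) \<longlonglongrightarrow> I"
    using assms by (elim has_bochner_integral.cases) blast
  have sm_s[measurable]: "s i \<in> borel_measurable M" for i
    using s by (auto intro: borel_measurable_simple_function sbi_simple)
  show ?thesis
  proof (rule hbiI)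
    show "strongly_measurable M (\<lambda>x. \<phi> x *\<^sub>R d)" by (rule sm_scaleR[OF sm_real[OF phim] sm_const])
    show "SBI M (\<lambda>x. s i x *\<^sub>R d)" for i
      using simple_bochner_integrable_compose2[of "\<lambda>a b. a *\<^sub>R d" M "s i" "s i"] s by auto
    have "SBINT M (\<lambda>x. s i x *\<^sub>R d) = SBINT M (s i) *\<^sub>R d" for i
      by (rule simple_bochner_integral_linear[OF _ s]) (simp add: bounded_linear.linear[OF bounded_linear_scaleR_left])
    then show "(\<lambda>i. SBINT M (\<lambda>x. s i x *\<^sub>R d)) \<longlonglongrightarrow> I *\<^sub>R d"
      using tendsto_scaleR[OF sx tendsto_const] by simp
    have "(\<integral>\<^sup>+ x. norm (\<phi> x *\<^sub>R d - s i x *\<^sub>R d) \<partial>M) = ennreal (norm d) * (\<integral>\<^sup>+ x. norm (\<phi> x - s i x) \<partial>M)" for i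
    proof -
      have "(\<integral>\<^sup>+ x. norm (\<phi> x *\<^sub>R d - s i x *\<^sub>R d) \<partial>M) = (\<integral>\<^sup>+ x. ennreal (norm d) * ennreal (norm (\<phi> x - s i x)) \<partial>M)"
        by (intro nn_integral_cong) (simp add: ennreal_mult[symmetric] scaleR_diff_left[symmetric] mult.commute del: scaleR_diff_left)
      also have "\<dots> = ennreal (norm d) * (\<integral>\<^sup>+ x. norm (\<phi> x - s i x) \<partial>M)"
        by (rule nn_integral_cmult) measurable
      finally show ?thesis .
    qed
    moreover have "(\<lambda>i. ennreal (norm d) * (\<integral>\<^sup>+ x. norm (\<phi> x - s i x) \<partial>M)) \<longlonglongrightarrow> ennreal (norm d) * 0"
      by (rule ennreal_tendsto_cmult[OF _ S]) simp
    ultimately show "(\<lambda>i. \<integral>\<^sup>+ x. norm (\<phi> x *\<^sub>R d - s i x *\<^sub>R d) \<partial>M) \<longlonglongrightarrow> 0" by simp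
  qed
qed

lemma hbi_return:
  fixes g :: "'a \<Rightarrow> 'b::banach"
  assumes x: "x \<in> space M" and g: "strongly_measurable M g"
  shows "has_bochner_int (return M x) g (g x)"
proof (rule hbiI[where s="\<lambda>i y. g x"])
  show "strongly_measurable (return M x) g" using g by (subst sm_cong_sets) auto
  show "SBI (return M x) (\<lambda>y. g x)" for i :: nat
    by (rule fm_sbi) (rule prob_space.axioms(1)[OF prob_space_return[OF x]], simp)
  have "(\<integral>\<^sup>+ y. ennreal (norm (g y - g x)) \<partial>return M x) = ennreal (norm (g x - g x))"
    by (rule nn_integral_return[OF x]) (rule ennorm_meas[OF sm_diff[OF g sm_const]])
  then show "(\<lambda>i. \<integral>\<^sup>+ y. ennreal (norm (g y - g x)) \<partial>return M x) \<longlonglongrightarrow> 0" by simp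
  have "space (return M x) \<noteq> {}" using x by auto
  then have "SBINT (return M x) (\<lambda>y. g x) = measure (return M x) (space (return M x)) *\<^sub>R g x"
    by (simp add: simple_bochner_integral_def image_constant_conv)
  also have "\<dots> = g x" using x by (simp add: measure_return)
  finally show "(\<lambda>i. SBINT (return M x) (\<lambda>y. g x)) \<longlonglongrightarrow> g x" by simp
qed

lemma tangent_pow:
  fixes a t :: real
  assumes a: "0 \<le> a" and t: "0 \<le> t"
  shows "a ^ Suc k + real (Suc k) * a ^ k * (t - a) \<le> t ^ Suc k"
proof (induction k)
  case 0 then show ?case by simp
next
  case (Suc k)
  have eq: "t * (a ^ Suc k + real (Suc k) * a ^ k * (t - a)) - (a ^ Suc (Suc k) + real (Suc (Suc k)) * a ^ Suc k * (t - a))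
      = real (Suc k) * a ^ k * (t - a)^2"
    by (simp add: algebra_simps power2_eq_square)
  have nn: "0 \<le> real (Suc k) * a ^ k * (t - a)^2" using a by simp
  have "t * (a ^ Suc k + real (Suc k) * a ^ k * (t - a)) \<le> t * t ^ Suc k"
    using Suc t by (rule mult_left_mono)
  then show ?case using eq nn by simp
qed

lemma jensen_pow:
  fixes u :: "'a \<Rightarrow> real"
  assumes P: "prob_space M" and um[measurable]: "u \<in> borel_measurable M" and nn: "\<And>x. 0 \<le> u x" and m: "1 \<le> m"
  shows "(\<integral>\<^sup>+ x. ennreal (u x) \<partial>M) ^ m \<le> (\<integral>\<^sup>+ x. ennreal (u x ^ m) \<partial>M)"
proof (cases "(\<integral>\<^sup>+ x. ennreal (u x ^ m) \<partial>M) = \<infinity>")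
  case True then show ?thesis by simp
next
  case False
  interpret prob_space M by (rule P)
  obtain k where k: "m = Suc k" using m by (cases m) auto
  have fin_m: "(\<integral>\<^sup>+ x. ennreal (u x ^ m) \<partial>M) < \<infinity>" using False by (simp add: less_top)
  have int_m: "integrable M (\<lambda>x. u x ^ m)"
    by (rule integrableI_nonneg) (use fin_m nn in auto)
  have le1: "u x \<le> 1 + u x ^ m" for x
  proof (cases "u x \<le> 1")
    case True then show ?thesis using nn[of x] zero_le_power[of "u x" m] by linarith
  next
    case False
    then have "u x \<le> u x ^ m" using m by (intro self_le_power) auto
    then show ?thesis by simp
  qed
  have "(\<integral>\<^sup>+ x. ennreal (u x) \<partial>M) \<le> (\<integral>\<^sup>+ x. ennreal 1 + ennreal (u x ^ m) \<partial>M)"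
  proof (intro nn_integral_mono)
    fix x
    have "ennreal (u x) \<le> ennreal (1 + u x ^ m)" by (rule ennreal_leI[OF le1])
    also have "\<dots> = ennreal 1 + ennreal (u x ^ m)" by (rule ennreal_plus) (use nn in auto)
    finally show "ennreal (u x) \<le> ennreal 1 + ennreal (u x ^ m)" .
  qed
  also have "\<dots> = (\<integral>\<^sup>+ x. ennreal 1 \<partial>M) + (\<integral>\<^sup>+ x. ennreal (u x ^ m) \<partial>M)"
    by (rule nn_integral_add) auto
  also have "\<dots> < \<infinity>" using fin_m by (simp add: emeasure_space_1)
  finally have fin1: "(\<integral>\<^sup>+ x. ennreal (u x) \<partial>M) < \<infinity>" .
  have int1: "integrable M u"
    by (rule integrableI_nonneg) (use fin1 nn in auto)
  define a where "a = integral\<^sup>L M u"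
  have a0: "0 \<le> a" unfolding a_def using nn by (simp add: integral_nonneg_AE)
  have e1: "(\<integral>\<^sup>+ x. ennreal (u x) \<partial>M) = ennreal a"
    unfolding a_def by (rule nn_integral_eq_integral[OF int1]) (use nn in auto)
  have e2: "(\<integral>\<^sup>+ x. ennreal (u x ^ m) \<partial>M) = ennreal (integral\<^sup>L M (\<lambda>x. u x ^ m))"
    by (rule nn_integral_eq_integral[OF int_m]) (use nn in auto)
  have "a ^ m = integral\<^sup>L M (\<lambda>x. a ^ m + real m * a ^ (m - 1) * (u x - a))"
  proof -
    have "integral\<^sup>L M (\<lambda>x. a ^ m + real m * a ^ (m - 1) * (u x - a)) =
        integral\<^sup>L M (\<lambda>x. a ^ m) + integral\<^sup>L M (\<lambda>x. real m * a ^ (m - 1) * (u x - a))"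
      by (rule Bochner_Integration.integral_add[OF integrable_const])
         (auto intro!: integrable_mult_right integrable_diff int1)
    also have "integral\<^sup>L M (\<lambda>x. real m * a ^ (m - 1) * (u x - a)) = real m * a ^ (m - 1) * integral\<^sup>L M (\<lambda>x. u x - a)"
      by (rule integral_mult_right_zero)
    also have "integral\<^sup>L M (\<lambda>x. u x - a) = integral\<^sup>L M u - integral\<^sup>L M (\<lambda>x. a)"
      by (rule Bochner_Integration.integral_diff[OF int1 integrable_const])
    finally show ?thesis by (simp add: a_def prob_space)
  qed
  also have "\<dots> \<le> integral\<^sup>L M (\<lambda>x. u x ^ m)"
  proof (rule integral_mono)
    show "integrable M (\<lambda>x. a ^ m + real m * a ^ (m - 1) * (u x - a))"
      by (auto intro!: integrable_add integrable_mult_right integrable_diff int1)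
    show "integrable M (\<lambda>x. u x ^ m)" by (rule int_m)
    show "a ^ m + real m * a ^ (m - 1) * (u x - a) \<le> u x ^ m" for x
      using tangent_pow[OF a0 nn[of x], of k] k by simp
  qed
  finally have "a ^ m \<le> integral\<^sup>L M (\<lambda>x. u x ^ m)" .
  then have "ennreal (a ^ m) \<le> ennreal (integral\<^sup>L M (\<lambda>x. u x ^ m))" by (rule ennreal_leI)
  then show ?thesis unfolding e1 e2 using a0 by (simp add: ennreal_power)
qed

lemma Lnorm_cong_AE:
  assumes "AE x in M. f x = g x"
  shows "Lnorm M n f = Lnorm M n g"
proof (cases n)
  case (enat m)
  have "(\<integral>\<^sup>+ x. ennreal (norm (f x) ^ m) \<partial>M) = (\<integral>\<^sup>+ x. ennreal (norm (g x) ^ m) \<partial>M)"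
    by (rule nn_integral_cong_AE) (use assms in auto)
  then show ?thesis unfolding Lnorm_def enat by simp
next
  case infinity
  have "{C. AE x in M. ennreal (norm (f x)) \<le> C} = {C. AE x in M. ennreal (norm (g x)) \<le> C}"
  proof (intro Collect_cong iffI)
    fix C assume "AE x in M. ennreal (norm (f x)) \<le> C"
    then show "AE x in M. ennreal (norm (g x)) \<le> C" using assms by eventually_elim simp
  next
    fix C assume "AE x in M. ennreal (norm (g x)) \<le> C"
    then show "AE x in M. ennreal (norm (f x)) \<le> C" using assms by eventually_elim simp
  qed
  then show ?thesis unfolding Lnorm_def infinity by simp
qed

lemma Lnorm_fin_mono:
  fixes I J :: ennreal
  assumes "I \<le> J"
  shows "(if I = \<infinity> then \<infinity> else ennreal (enn2real I powr (1 / real m)))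
       \<le> (if J = \<infinity> then \<infinity> else ennreal (enn2real J powr (1 / real m)))"
proof (cases "J = \<infinity>")
  case True then show ?thesis by simp
next
  case False
  then have "I \<noteq> \<infinity>" using assms by (auto simp: top_unique)
  moreover have "enn2real I \<le> enn2real J" using assms False by (simp add: enn2real_mono less_top)
  ultimately show ?thesis using False
    by (simp add: ennreal_leI powr_mono2)
qed

lemma enat_ge1: "(enat m \<ge> 1) \<longleftrightarrow> m \<ge> 1"
  by (simp add: one_enat_def)

lemma Lmem_L1:
  fixes g :: "'a \<Rightarrow> 'v::real_normed_vector"
  assumes P: "prob_space M" and g: "strongly_measurable M g" and n: "n \<ge> 1" and L: "Lnorm M n g < \<infinity>"
  shows "(\<integral>\<^sup>+ x. norm (g x) \<partial>M) < \<infinity>"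
proof -
  interpret prob_space M by (rule P)
  have gm[measurable]: "(\<lambda>x. norm (g x)) \<in> borel_measurable M" by (rule sm_norm[OF g])
  show ?thesis
  proof (cases n)
    case (enat m)
    then have m: "m \<ge> 1" using n enat_ge1 by simp
    let ?I = "\<integral>\<^sup>+ x. ennreal (norm (g x) ^ m) \<partial>M"
    have "?I \<noteq> \<infinity>" using L unfolding Lnorm_def enat by (auto simp: Let_def split: if_splits)
    then have fin_m: "?I < \<infinity>" by (simp add: less_top)
    have le1: "norm (g x) \<le> 1 + norm (g x) ^ m" for x
    proof (cases "norm (g x) \<le> 1")
      case True then show ?thesis using zero_le_power[OF norm_ge_zero, of "g x" m] by linarith
    next
      case False
      then have "norm (g x) \<le> norm (g x) ^ m" using m by (intro self_le_power) auto
      then show ?thesis by simp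
    qed
    have "(\<integral>\<^sup>+ x. ennreal (norm (g x)) \<partial>M) \<le> (\<integral>\<^sup>+ x. ennreal 1 + ennreal (norm (g x) ^ m) \<partial>M)"
    proof (intro nn_integral_mono)
      fix x
      have "ennreal (norm (g x)) \<le> ennreal (1 + norm (g x) ^ m)" by (rule ennreal_leI[OF le1])
      also have "\<dots> = ennreal 1 + ennreal (norm (g x) ^ m)" by (rule ennreal_plus) auto
      finally show "ennreal (norm (g x)) \<le> ennreal 1 + ennreal (norm (g x) ^ m)" .
    qed
    also have "\<dots> = (\<integral>\<^sup>+ x. ennreal 1 \<partial>M) + ?I"
      by (rule nn_integral_add) auto
    also have "\<dots> < \<infinity>" using fin_m by (simp add: emeasure_space_1)
    finally show ?thesis .
  next
    case infinity
    have "Inf {C. AE x in M. ennreal (norm (g x)) \<le> C} < \<infinity>"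
      using L unfolding Lnorm_def infinity by simp
    then obtain C where C: "AE x in M. ennreal (norm (g x)) \<le> C" "C < \<infinity>"
      by (auto simp: Inf_less_iff)
    have "(\<integral>\<^sup>+ x. ennreal (norm (g x)) \<partial>M) \<le> (\<integral>\<^sup>+ x. C \<partial>M)"
      using C(1) by (rule nn_integral_mono_AE)
    also have "\<dots> = C" by (simp add: emeasure_space_1)
    finally show ?thesis using C(2) by (rule le_less_trans)
  qed
qed

locale mpk =
  fixes p :: "'a measure" and q :: "'b measure" and k :: "'a \<Rightarrow> 'b measure"
  assumes mp: "mp_kernel p q k"
begin

lemma P: "prob_space p" using mp by (simp add: mp_kernel_def)
lemma kP: "k \<in> p \<rightarrow>\<^sub>M prob_algebra q" using mp by (simp add: mp_kernel_def)
lemma kS: "k \<in> p \<rightarrow>\<^sub>M subprob_algebra q" by (rule measurable_prob_algebraD[OF kP])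
lemma qb: "q = bind p k" using mp by (simp add: mp_kernel_def)
lemma sp_ne: "space p \<noteq> {}" using prob_space.not_empty[OF P] .

lemma kx: assumes "x \<in> space p" shows "prob_space (k x)" "sets (k x) = sets q" "space (k x) = space q"
proof -
  have "k x \<in> space (prob_algebra q)" using measurable_space[OF kP assms] .
  then show "prob_space (k x)" "sets (k x) = sets q" by (auto simp: space_prob_algebra)
  then show "space (k x) = space q" by (intro sets_eq_imp_space_eq) blast
qed

lemma kfm: "x \<in> space p \<Longrightarrow> finite_measure (k x)"
  using prob_space.axioms(1)[OF kx(1)] .

lemma qP: "prob_space q"
proof -
  have "AE x in p. prob_space (k x)" by (rule AE_I2) (rule kx(1))
  then have "prob_space (bind p k)"
    by (rule prob_space.prob_space_bind[OF P _ kS])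
  then show ?thesis using qb by simp
qed

lemma nn_k:
  assumes [measurable]: "f \<in> borel_measurable q"
  shows "(\<integral>\<^sup>+ x. (\<integral>\<^sup>+ y. f y \<partial>k x) \<partial>p) = (\<integral>\<^sup>+ y. f y \<partial>q)"
  using nn_integral_bind[OF assms kS] qb by simp

lemma nn_k_meas:
  assumes "f \<in> borel_measurable q"
  shows "(\<lambda>x. \<integral>\<^sup>+ y. f y \<partial>k x) \<in> borel_measurable p"
  by (rule measurable_compose[OF kS nn_integral_measurable_subprob_algebra[OF assms]])

lemma measure_k_meas:
  assumes "A \<in> sets q"
  shows "(\<lambda>x. measure (k x) A) \<in> borel_measurable p"
  by (rule measurable_compose[OF kS measurable_measure_subprob_algebra[OF assms]])

lemma AE_k:
  assumes "AE y in q. Q y"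
  shows "AE x in p. AE y in k x. Q y"
proof -
  obtain N where N: "{y \<in> space q. \<not> Q y} \<subseteq> N" "emeasure q N = 0" "N \<in> sets q"
    using assms by (rule AE_E)
  have "emeasure q N = (\<integral>\<^sup>+ x. emeasure (k x) N \<partial>p)"
    unfolding qb by (rule emeasure_bind[OF sp_ne kS N(3)])
  then have "(\<integral>\<^sup>+ x. emeasure (k x) N \<partial>p) = 0" using N(2) by simp
  then have "AE x in p. emeasure (k x) N = 0"
    by (subst nn_integral_0_iff_AE[symmetric])
       (rule measurable_compose[OF kS measurable_emeasure_subprob_algebra[OF N(3)]])
  then show ?thesis
  proof (rule AE_mp[OF _ AE_I2], intro impI)
    fix x assume x: "x \<in> space p" and e: "emeasure (k x) N = 0"
    have "{y \<in> space (k x). \<not> Q y} \<subseteq> N" using N(1) kx(3)[OF x] by simp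
    moreover have "N \<in> sets (k x)" using N(3) kx(2)[OF x] by simp
    ultimately show "AE y in k x. Q y"
      by (rule AE_I[of _ _ N, OF _ e])
  qed
qed

lemma sm_k: "x \<in> space p \<Longrightarrow> strongly_measurable q g \<Longrightarrow> strongly_measurable (k x) g"
  using sm_cong_sets[OF kx(2)] by blast

end

context mpk
begin

lemma C_AE:
  fixes g :: "'b \<Rightarrow> 'v::banach"
  assumes g: "strongly_measurable q g" and fin: "(\<integral>\<^sup>+ y. norm (g y) \<partial>q) < \<infinity>"
  shows "AE x in p. (\<integral>\<^sup>+ y. ennreal (norm (g y)) \<partial>k x) < \<infinity>"
proof -
  have m: "(\<lambda>x. \<integral>\<^sup>+ y. ennreal (norm (g y)) \<partial>k x) \<in> borel_measurable p"
    by (rule nn_k_meas[OF ennorm_meas[OF g]])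
  have "(\<integral>\<^sup>+ x. (\<integral>\<^sup>+ y. ennreal (norm (g y)) \<partial>k x) \<partial>p) \<noteq> \<infinity>"
    using nn_k[OF ennorm_meas[OF g]] fin by simp
  from nn_integral_PInf_AE[OF m this] show ?thesis by (simp add: less_top)
qed

lemma kint:
  fixes g :: "'b \<Rightarrow> 'v::banach"
  assumes x: "x \<in> space p" and g: "strongly_measurable q g"
    and fin: "(\<integral>\<^sup>+ y. ennreal (norm (g y)) \<partial>k x) < \<infinity>"
  shows "has_bochner_int (k x) g (kstar k g x)"
proof -
  obtain v where v: "has_bochner_int (k x) g v"
    using hbi_exists[OF kfm[OF x] sm_k[OF x g] fin] by blast
  moreover have "kstar k g x = v" unfolding kstar_def by (rule hbi_int[OF v])
  ultimately show ?thesis by simp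
qed

lemma kstar_bound:
  fixes g :: "'b \<Rightarrow> 'v::banach"
  assumes x: "x \<in> space p" and g: "strongly_measurable q g"
    and fin: "(\<integral>\<^sup>+ y. ennreal (norm (g y)) \<partial>k x) < \<infinity>"
  shows "ennreal (norm (kstar k g x)) \<le> (\<integral>\<^sup>+ y. ennreal (norm (g y)) \<partial>k x)"
  by (rule hbi_norm[OF kint[OF assms]])

lemma kstar_aesm:
  fixes g :: "'b \<Rightarrow> 'v::banach"
  assumes g: "strongly_measurable q g" and fin: "(\<integral>\<^sup>+ y. norm (g y) \<partial>q) < \<infinity>"
  shows "ae_strongly_measurable p (kstar k g)"
proof -
  obtain s where s: "\<And>i. simple_function q (s i)"
    "\<And>y. y \<in> space q \<Longrightarrow> (\<lambda>i. s i y) \<longlonglongrightarrow> g y"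
    "\<And>i y. y \<in> space q \<Longrightarrow> norm (s i y) \<le> 2 * norm (g y)"
    using sm_approx[OF g] by metis
  define F where "F i x = (\<Sum>v\<in>s i ` space q. measure (k x) (s i -` {v} \<inter> space q) *\<^sub>R v)" for i x
  have Fsm: "strongly_measurable p (F i)" for i
    unfolding F_def
  proof (rule sm_sum)
    show "finite (s i ` space q)" by (rule simple_functionD(1)[OF s(1)])
    show "strongly_measurable p (\<lambda>x. measure (k x) (s i -` {v} \<inter> space q) *\<^sub>R v)" for v
      by (rule sm_scaleR[OF sm_real[OF measure_k_meas[OF simple_functionD(2)[OF s(1)]]] sm_const])
  qed
  have sk: "simple_function (k x) (s i)" if "x \<in> space p" for x i
    using s(1) simple_function_cong_algebra[OF kx(2,3)[OF that]] by blast
  have Fx: "F i x = SBINT (k x) (s i)" if "x \<in> space p" for x i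
  proof -
    have "{y \<in> space q. s i y = v} = s i -` {v} \<inter> space q" for v by auto
    then show ?thesis unfolding F_def simple_bochner_integral_def kx(3)[OF that] by simp
  qed
  define Cs where "Cs = {x \<in> space p. (\<integral>\<^sup>+ y. ennreal (norm (g y)) \<partial>k x) < \<infinity>}"
  have Cs_sets: "Cs \<in> sets p"
  proof -
    have [measurable]: "(\<lambda>x. \<integral>\<^sup>+ y. ennreal (norm (g y)) \<partial>k x) \<in> borel_measurable p"
      by (rule nn_k_meas[OF ennorm_meas[OF g]])
    show ?thesis unfolding Cs_def by measurable
  qed
  have conv: "(\<lambda>i. F i x) \<longlonglongrightarrow> kstar k g x" if x: "x \<in> Cs" for x
  proof -
    have xp: "x \<in> space p" and xf: "(\<integral>\<^sup>+ y. ennreal (norm (g y)) \<partial>k x) < \<infinity>" using x by (auto simp: Cs_def)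
    have w_m: "(\<lambda>y. 2 * norm (g y)) \<in> borel_measurable (k x)"
      using sm_norm[OF sm_k[OF xp g]] by measurable
    have w_fin: "(\<integral>\<^sup>+ y. ennreal (2 * norm (g y)) \<partial>k x) < \<infinity>"
    proof -
      have "(\<integral>\<^sup>+ y. ennreal (2 * norm (g y)) \<partial>k x) = 2 * (\<integral>\<^sup>+ y. ennreal (norm (g y)) \<partial>k x)"
        by (subst nn_integral_cmult[symmetric]) (auto simp: ennreal_mult intro: sm_norm[OF sm_k[OF xp g]] ennorm_meas[OF sm_k[OF xp g]])
      then show ?thesis using xf by (simp add: ennreal_mult_less_top)
    qed
    obtain v' where v': "has_bochner_int (k x) g v'" and lim: "(\<lambda>i. SBINT (k x) (s i)) \<longlonglongrightarrow> v'"
    proof (atomize_elim, rule hbi_dct[OF kfm[OF xp] sm_k[OF xp g] _ _ w_m w_fin])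
      show "has_bochner_int (k x) (s i) (SBINT (k x) (s i))" for i
        by (rule hbi_simple[OF kfm[OF xp] sk[OF xp]])
      show "AE y in k x. (\<lambda>i. s i y) \<longlonglongrightarrow> g y"
        by (rule AE_I2) (use s(2) kx(3)[OF xp] in auto)
      show "AE y in k x. norm (s i y) \<le> 2 * norm (g y)" for i
        by (rule AE_I2) (use s(3) kx(3)[OF xp] in auto)
    qed
    have "kstar k g x = v'" unfolding kstar_def by (rule hbi_int[OF v'])
    then show ?thesis using lim Fx[OF xp] by simp
  qed
  define H where "H x = indicator Cs x *\<^sub>R kstar k g x" for x
  have Hsm: "strongly_measurable p H"
  proof (rule sm_limit[where f="\<lambda>i x. indicator Cs x *\<^sub>R F i x"])
    show "strongly_measurable p (\<lambda>x. indicator Cs x *\<^sub>R F i x)" for i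
      by (rule sm_indicator_scaleR[OF Cs_sets Fsm])
    show "(\<lambda>i. indicator Cs x *\<^sub>R F i x) \<longlonglongrightarrow> H x" if "x \<in> space p" for x
    proof (cases "x \<in> Cs")
      case True then show ?thesis unfolding H_def using conv[OF True] by simp
    next
      case False then show ?thesis unfolding H_def by simp
    qed
  qed
  have "AE x in p. kstar k g x = H x"
    using C_AE[OF g fin]
  proof (rule AE_mp[OF _ AE_I2], intro impI)
    fix x assume "x \<in> space p" "(\<integral>\<^sup>+ y. ennreal (norm (g y)) \<partial>k x) < \<infinity>"
    then have "x \<in> Cs" by (simp add: Cs_def)
    then show "kstar k g x = H x" by (simp add: H_def)
  qed
  then show ?thesis unfolding ae_strongly_measurable_def using Hsm by blast
qed

lemma kstar_Lnorm:
  fixes g :: "'b \<Rightarrow> 'v::banach"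
  assumes g: "strongly_measurable q g" and fin: "(\<integral>\<^sup>+ y. norm (g y) \<partial>q) < \<infinity>" and n: "n \<ge> 1"
  shows "Lnorm p n (kstar k g) \<le> Lnorm q n g"
proof (cases n)
  case (enat m)
  then have m: "m \<ge> 1" using n enat_ge1 by simp
  have gm[measurable]: "(\<lambda>y. norm (g y)) \<in> borel_measurable q" by (rule sm_norm[OF g])
  have "(\<integral>\<^sup>+ x. ennreal (norm (kstar k g x) ^ m) \<partial>p) \<le> (\<integral>\<^sup>+ x. (\<integral>\<^sup>+ y. ennreal (norm (g y) ^ m) \<partial>k x) \<partial>p)"
  proof (rule nn_integral_mono_AE)
    show "AE x in p. ennreal (norm (kstar k g x) ^ m) \<le> (\<integral>\<^sup>+ y. ennreal (norm (g y) ^ m) \<partial>k x)"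
      using C_AE[OF g fin]
    proof (rule AE_mp[OF _ AE_I2], intro impI)
      fix x assume xp: "x \<in> space p" and xf: "(\<integral>\<^sup>+ y. ennreal (norm (g y)) \<partial>k x) < \<infinity>"
      have "ennreal (norm (kstar k g x) ^ m) = ennreal (norm (kstar k g x)) ^ m"
        by (simp add: ennreal_power)
      also have "\<dots> \<le> (\<integral>\<^sup>+ y. ennreal (norm (g y)) \<partial>k x) ^ m"
        by (rule power_mono[OF kstar_bound[OF xp g xf]]) simp
      also have "\<dots> \<le> (\<integral>\<^sup>+ y. ennreal (norm (g y) ^ m) \<partial>k x)"
        by (rule jensen_pow[OF kx(1)[OF xp] sm_norm[OF sm_k[OF xp g]] _ m]) simp
      finally show "ennreal (norm (kstar k g x) ^ m) \<le> (\<integral>\<^sup>+ y. ennreal (norm (g y) ^ m) \<partial>k x)" .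
    qed
  qed
  also have "\<dots> = (\<integral>\<^sup>+ y. ennreal (norm (g y) ^ m) \<partial>q)"
    by (rule nn_k) measurable
  finally have le: "(\<integral>\<^sup>+ x. ennreal (norm (kstar k g x) ^ m) \<partial>p) \<le> (\<integral>\<^sup>+ y. ennreal (norm (g y) ^ m) \<partial>q)" .
  show ?thesis unfolding Lnorm_def enat Let_def using Lnorm_fin_mono[OF le, of m] by simp
next
  case infinity
  have "{C. AE y in q. ennreal (norm (g y)) \<le> C} \<subseteq> {C. AE x in p. ennreal (norm (kstar k g x)) \<le> C}"
  proof safe
    fix c assume c: "AE y in q. ennreal (norm (g y)) \<le> c"
    have "AE x in p. AE y in k x. ennreal (norm (g y)) \<le> c" by (rule AE_k[OF c])
    then show "AE x in p. ennreal (norm (kstar k g x)) \<le> c"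
      using C_AE[OF g fin]
    proof (rule AE_mp[OF _ AE_mp[OF _ AE_I2]], intro impI)
      fix x assume xp: "x \<in> space p" and xf: "(\<integral>\<^sup>+ y. ennreal (norm (g y)) \<partial>k x) < \<infinity>"
        and xc: "AE y in k x. ennreal (norm (g y)) \<le> c"
      have "ennreal (norm (kstar k g x)) \<le> (\<integral>\<^sup>+ y. ennreal (norm (g y)) \<partial>k x)"
        by (rule kstar_bound[OF xp g xf])
      also have "\<dots> \<le> (\<integral>\<^sup>+ y. c \<partial>k x)" using xc by (rule nn_integral_mono_AE)
      also have "\<dots> = c" using prob_space.emeasure_space_1[OF kx(1)[OF xp]] by simp
      finally show "ennreal (norm (kstar k g x)) \<le> c" .
    qed
  qed
  then show ?thesis unfolding Lnorm_def infinity by (simp add: Inf_superset_mono)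
qed

end

lemma sbint_norm:
  fixes s :: "'a \<Rightarrow> 'b::banach"
  assumes "finite_measure M" "simple_function M s"
  shows "ennreal (norm (SBINT M s)) \<le> (\<integral>\<^sup>+ y. ennreal (norm (s y)) \<partial>M)"
  by (rule hbi_norm[OF hbi_simple[OF assms]])

context mpk
begin

lemma simple_conv:
  fixes g :: "'b \<Rightarrow> 'v::banach"
  assumes xp: "x \<in> space p" and g: "strongly_measurable q g"
    and xf: "(\<integral>\<^sup>+ y. ennreal (norm (g y)) \<partial>k x) < \<infinity>"
    and s: "\<And>i. simple_function q (s i)"
    "\<And>y. y \<in> space q \<Longrightarrow> (\<lambda>i. s i y) \<longlonglongrightarrow> g y"
    "\<And>i y. y \<in> space q \<Longrightarrow> norm (s i y) \<le> 2 * norm (g y)"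
  shows "(\<lambda>i. SBINT (k x) (s i)) \<longlonglongrightarrow> kstar k g x"
proof -
  have sk: "simple_function (k x) (s i)" for i
    using s(1) simple_function_cong_algebra[OF kx(2,3)[OF xp]] by blast
  have w_m: "(\<lambda>y. 2 * norm (g y)) \<in> borel_measurable (k x)"
    using sm_norm[OF sm_k[OF xp g]] by measurable
  have w_fin: "(\<integral>\<^sup>+ y. ennreal (2 * norm (g y)) \<partial>k x) < \<infinity>"
  proof -
    have "(\<integral>\<^sup>+ y. ennreal (2 * norm (g y)) \<partial>k x) = 2 * (\<integral>\<^sup>+ y. ennreal (norm (g y)) \<partial>k x)"
      by (subst nn_integral_cmult[symmetric]) (auto simp: ennreal_mult intro: sm_norm[OF sm_k[OF xp g]] ennorm_meas[OF sm_k[OF xp g]])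
    then show ?thesis using xf by (simp add: ennreal_mult_less_top)
  qed
  obtain v' where v': "has_bochner_int (k x) g v'" and lim: "(\<lambda>i. SBINT (k x) (s i)) \<longlonglongrightarrow> v'"
  proof (atomize_elim, rule hbi_dct[OF kfm[OF xp] sm_k[OF xp g] _ _ w_m w_fin])
    show "has_bochner_int (k x) (s i) (SBINT (k x) (s i))" for i
      by (rule hbi_simple[OF kfm[OF xp] sk])
    show "AE y in k x. (\<lambda>i. s i y) \<longlonglongrightarrow> g y"
      by (rule AE_I2) (use s(2) kx(3)[OF xp] in auto)
    show "AE y in k x. norm (s i y) \<le> 2 * norm (g y)" for i
      by (rule AE_I2) (use s(3) kx(3)[OF xp] in auto)
  qed
  have "kstar k g x = v'" unfolding kstar_def by (rule hbi_int[OF v'])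
  then show ?thesis using lim by simp
qed

lemma compose:
  fixes g :: "'c \<Rightarrow> 'v::banach" and l :: "'b \<Rightarrow> 'c measure" and r :: "'c measure"
  assumes l: "mp_kernel q r l" and g: "strongly_measurable r g"
    and gfin: "(\<integral>\<^sup>+ z. norm (g z) \<partial>r) < \<infinity>"
    and h: "strongly_measurable q h" and hae: "AE y in q. h y = kstar l g y"
  shows "AE x in p. kstar (\<lambda>x. bind (k x) l) g x = kstar k h x"
proof -
  interpret L: mpk q r l by (rule mpk.intro[OF l])
  define G where "G y = (\<integral>\<^sup>+ z. ennreal (norm (g z)) \<partial>l y)" for y
  have Gm[measurable]: "G \<in> borel_measurable q" unfolding G_def by (rule L.nn_k_meas[OF ennorm_meas[OF g]])
  have "(\<integral>\<^sup>+ x. (\<integral>\<^sup>+ y. G y \<partial>k x) \<partial>p) = (\<integral>\<^sup>+ y. G y \<partial>q)" by (rule nn_k[OF Gm])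
  also have "\<dots> = (\<integral>\<^sup>+ z. ennreal (norm (g z)) \<partial>r)" unfolding G_def by (rule L.nn_k[OF ennorm_meas[OF g]])
  finally have "(\<integral>\<^sup>+ x. (\<integral>\<^sup>+ y. G y \<partial>k x) \<partial>p) \<noteq> \<infinity>" using gfin by simp
  from nn_integral_PInf_AE[OF nn_k_meas[OF Gm] this]
  have A1: "AE x in p. (\<integral>\<^sup>+ y. G y \<partial>k x) \<noteq> \<infinity>" .
  have A2: "AE x in p. AE y in k x. h y = kstar l g y" by (rule AE_k[OF hae])
  have A3: "AE x in p. AE y in k x. G y < \<infinity>" unfolding G_def by (rule AE_k[OF L.C_AE[OF g gfin]])
  obtain s where s: "\<And>i. simple_function r (s i)"
    "\<And>z. z \<in> space r \<Longrightarrow> (\<lambda>i. s i z) \<longlonglongrightarrow> g z"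
    "\<And>i z. z \<in> space r \<Longrightarrow> norm (s i z) \<le> 2 * norm (g z)"
    using sm_approx[OF g] by metis
  show ?thesis
    using A1 A2 A3
  proof (rule AE_mp[OF _ AE_mp[OF _ AE_mp[OF _ AE_I2]]], intro impI)
    fix x assume xp: "x \<in> space p" and x1: "(\<integral>\<^sup>+ y. G y \<partial>k x) \<noteq> \<infinity>"
      and x2: "AE y in k x. h y = kstar l g y" and x3: "AE y in k x. G y < \<infinity>"
    define B where "B = bind (k x) l"
    have kxA: "k x \<in> space (prob_algebra q)" using measurable_space[OF kP xp] .
    have Bsets: "sets B = sets r" unfolding B_def by (rule sets_bind'[OF kxA L.kP])
    have Bspace: "space B = space r" using Bsets by (intro sets_eq_imp_space_eq) blast
    have BP: "prob_space B" unfolding B_def by (rule prob_space_bind'[OF kxA L.kP])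
    have Bfm: "finite_measure B" by (rule prob_space.axioms(1)[OF BP])
    have lk: "l \<in> measurable (k x) (subprob_algebra r)"
      using L.kS measurable_cong_sets[OF kx(2)[OF xp] refl] by blast
    have lkP: "l \<in> k x \<rightarrow>\<^sub>M prob_algebra r"
      using L.kP measurable_cong_sets[OF kx(2)[OF xp] refl] by blast
    have sB: "simple_function B (s i)" for i
      using s(1) simple_function_cong_algebra[OF Bsets Bspace] by blast
    have gB: "strongly_measurable B g" using g sm_cong_sets[OF Bsets] by blast
    have Bfin: "(\<integral>\<^sup>+ z. ennreal (norm (g z)) \<partial>B) < \<infinity>"
    proof -
      have "(\<integral>\<^sup>+ z. ennreal (norm (g z)) \<partial>B) = (\<integral>\<^sup>+ y. G y \<partial>k x)"
        unfolding B_def G_def by (rule nn_integral_bind[OF ennorm_meas[OF g] lk])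
      then show ?thesis using x1 by (simp add: less_top)
    qed
    obtain v1 where v1: "has_bochner_int B g v1" using hbi_exists[OF Bfm gB Bfin] by blast
    have lhs: "kstar (\<lambda>x. bind (k x) l) g x = v1"
      unfolding kstar_def B_def[symmetric] by (rule hbi_int[OF v1])
    have w_m: "(\<lambda>z. 2 * norm (g z)) \<in> borel_measurable B"
      using sm_norm[OF gB] by measurable
    have w_fin: "(\<integral>\<^sup>+ z. ennreal (2 * norm (g z)) \<partial>B) < \<infinity>"
    proof -
      have "(\<integral>\<^sup>+ z. ennreal (2 * norm (g z)) \<partial>B) = 2 * (\<integral>\<^sup>+ z. ennreal (norm (g z)) \<partial>B)"
        by (subst nn_integral_cmult[symmetric]) (auto simp: ennreal_mult intro: sm_norm[OF gB] ennorm_meas[OF gB])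
      then show ?thesis using Bfin by (simp add: ennreal_mult_less_top)
    qed
    obtain v1' where v1': "has_bochner_int B g v1'" and lim1: "(\<lambda>i. SBINT B (s i)) \<longlonglongrightarrow> v1'"
    proof (atomize_elim, rule hbi_dct[OF Bfm gB _ _ w_m w_fin])
      show "has_bochner_int B (s i) (SBINT B (s i))" for i
        by (rule hbi_simple[OF Bfm sB])
      show "AE z in B. (\<lambda>i. s i z) \<longlonglongrightarrow> g z"
        by (rule AE_I2) (use s(2) Bspace in auto)
      show "AE z in B. norm (s i z) \<le> 2 * norm (g z)" for i
        by (rule AE_I2) (use s(3) Bspace in auto)
    qed
    have "v1' = v1" using hbi_unique[OF v1' v1] .
    with lim1 have lim1': "(\<lambda>i. SBINT B (s i)) \<longlonglongrightarrow> v1" by simp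
    define F where "F i y = (\<Sum>v\<in>s i ` space r. measure (l y) (s i -` {v} \<inter> space r) *\<^sub>R v)" for i y
    have Fl: "F i y = SBINT (l y) (s i)" if "y \<in> space q" for i y
    proof -
      have "{z \<in> space r. s i z = v} = s i -` {v} \<inter> space r" for v by auto
      then show ?thesis unfolding F_def simple_bochner_integral_def L.kx(3)[OF that] by simp
    qed
    have mle: "measure (l y) A \<le> 1" if "y \<in> space (k x)" for y A
    proof -
      have "y \<in> space q" using that kx(3)[OF xp] by simp
      then show ?thesis using prob_space.prob_le_1[OF L.kx(1)] by simp
    qed
    have mB: "measure B A = integral\<^sup>L (k x) (\<lambda>y. measure (l y) A)" if A: "A \<in> sets r" for A
    proof -
      have mm: "(\<lambda>y. measure (l y) A) \<in> borel_measurable (k x)"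
        using L.measure_k_meas[OF A] measurable_cong_sets[OF kx(2)[OF xp] refl] by blast
      have int: "integrable (k x) (\<lambda>y. measure (l y) A)"
        by (rule finite_measure.integrable_const_bound[OF kfm[OF xp], where B=1]) (use mm mle in \<open>auto intro!: AE_I2\<close>)
      have "emeasure B A = (\<integral>\<^sup>+ y. emeasure (l y) A \<partial>k x)"
        unfolding B_def by (rule emeasure_bind_prob_algebra[OF kxA L.kP A])
      also have "\<dots> = (\<integral>\<^sup>+ y. ennreal (measure (l y) A) \<partial>k x)"
      proof (rule nn_integral_cong)
        fix y assume "y \<in> space (k x)"
        then have "y \<in> space q" using kx(3)[OF xp] by simp
        then show "emeasure (l y) A = ennreal (measure (l y) A)"
          using finite_measure.emeasure_eq_measure[OF L.kfm] by blast
      qed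
      also have "\<dots> = ennreal (integral\<^sup>L (k x) (\<lambda>y. measure (l y) A))"
        by (rule nn_integral_eq_integral[OF int]) simp
      finally have "emeasure B A = ennreal (integral\<^sup>L (k x) (\<lambda>y. measure (l y) A))" .
      moreover have "emeasure B A = ennreal (measure B A)"
        by (rule finite_measure.emeasure_eq_measure[OF Bfm])
      ultimately show ?thesis
        using integral_nonneg_AE[of "\<lambda>y. measure (l y) A" "k x"] by simp
    qed
    have Fhbi: "has_bochner_int (k x) (F i) (SBINT B (s i))" for i
    proof -
      have "has_bochner_int (k x) (\<lambda>y. \<Sum>v\<in>s i ` space r. measure (l y) (s i -` {v} \<inter> space r) *\<^sub>R v)
          (\<Sum>v\<in>s i ` space r. measure B (s i -` {v} \<inter> space r) *\<^sub>R v)"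
      proof (rule hbi_sum[OF kfm[OF xp] simple_functionD(1)[OF s(1)]])
        fix v
        have A: "s i -` {v} \<inter> space r \<in> sets r" by (rule simple_functionD(2)[OF s(1)])
        have mm: "(\<lambda>y. measure (l y) (s i -` {v} \<inter> space r)) \<in> borel_measurable (k x)"
          using L.measure_k_meas[OF A] measurable_cong_sets[OF kx(2)[OF xp] refl] by blast
        have int: "integrable (k x) (\<lambda>y. measure (l y) (s i -` {v} \<inter> space r))"
          by (rule finite_measure.integrable_const_bound[OF kfm[OF xp], where B=1]) (use mm mle in \<open>auto intro!: AE_I2\<close>)
        show "has_bochner_int (k x) (\<lambda>y. measure (l y) (s i -` {v} \<inter> space r) *\<^sub>R v)
            (measure B (s i -` {v} \<inter> space r) *\<^sub>R v)"
          unfolding mB[OF A] by (rule hbi_real_vec[OF has_bochner_integral_integrable[OF int]])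
      qed
      moreover have "SBINT B (s i) = (\<Sum>v\<in>s i ` space r. measure B (s i -` {v} \<inter> space r) *\<^sub>R v)"
      proof -
        have "{z \<in> space r. s i z = v} = s i -` {v} \<inter> space r" for v by auto
        then show ?thesis unfolding simple_bochner_integral_def Bspace by simp
      qed
      ultimately show ?thesis unfolding F_def by simp
    qed
    define w where "w y = 2 * enn2real (G y)" for y
    have w_m': "w \<in> borel_measurable (k x)"
    proof -
      have "w \<in> borel_measurable q" unfolding w_def by measurable
      then show ?thesis using measurable_cong_sets[OF kx(2)[OF xp] refl] by blast
    qed
    have w_fin': "(\<integral>\<^sup>+ y. ennreal (w y) \<partial>k x) < \<infinity>"
    proof -
      have "(\<integral>\<^sup>+ y. ennreal (w y) \<partial>k x) \<le> (\<integral>\<^sup>+ y. 2 * G y \<partial>k x)"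
      proof (rule nn_integral_mono)
        fix y
        have "ennreal (w y) = 2 * ennreal (enn2real (G y))" unfolding w_def by (simp add: ennreal_mult)
        also have "\<dots> \<le> 2 * G y" by (intro mult_left_mono) (auto simp: ennreal_enn2real_if)
        finally show "ennreal (w y) \<le> 2 * G y" .
      qed
      also have "\<dots> = 2 * (\<integral>\<^sup>+ y. G y \<partial>k x)"
        by (rule nn_integral_cmult) (use Gm measurable_cong_sets[OF kx(2)[OF xp] refl] in blast)
      also have "\<dots> < \<infinity>" using x1 by (simp add: ennreal_mult_less_top less_top)
      finally show ?thesis .
    qed
    obtain v2 where v2: "has_bochner_int (k x) h v2" and lim2: "(\<lambda>i. SBINT B (s i)) \<longlonglongrightarrow> v2"
    proof (atomize_elim, rule hbi_dct[OF kfm[OF xp] sm_k[OF xp h] Fhbi _ w_m' w_fin'])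
      show "AE y in k x. (\<lambda>i. F i y) \<longlonglongrightarrow> h y"
        using x2 x3
      proof (rule AE_mp[OF _ AE_mp[OF _ AE_I2]], intro impI)
        fix y assume y: "y \<in> space (k x)" and hy: "h y = kstar l g y" and Gy: "G y < \<infinity>"
        have yq: "y \<in> space q" using y kx(3)[OF xp] by simp
        have "(\<lambda>i. SBINT (l y) (s i)) \<longlonglongrightarrow> kstar l g y"
          by (rule L.simple_conv[OF yq g _ s]) (use Gy in \<open>simp add: G_def\<close>)
        then show "(\<lambda>i. F i y) \<longlonglongrightarrow> h y" using Fl[OF yq] hy by simp
      qed
      show "AE y in k x. norm (F i y) \<le> w y" for i
        using x3
      proof (rule AE_mp[OF _ AE_I2], intro impI)
        fix y assume y: "y \<in> space (k x)" and Gy: "G y < \<infinity>"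
        have yq: "y \<in> space q" using y kx(3)[OF xp] by simp
        have sl: "simple_function (l y) (s i)"
          using s(1) simple_function_cong_algebra[OF L.kx(2,3)[OF yq]] by blast
        have "ennreal (norm (F i y)) \<le> (\<integral>\<^sup>+ z. ennreal (norm (s i z)) \<partial>l y)"
          unfolding Fl[OF yq] by (rule sbint_norm[OF L.kfm[OF yq] sl])
        also have "\<dots> \<le> (\<integral>\<^sup>+ z. 2 * ennreal (norm (g z)) \<partial>l y)"
        proof (rule nn_integral_mono)
          fix z assume "z \<in> space (l y)"
          then have "z \<in> space r" using L.kx(3)[OF yq] by simp
          then have "ennreal (norm (s i z)) \<le> ennreal (2 * norm (g z))" by (intro ennreal_leI s(3))
          then show "ennreal (norm (s i z)) \<le> 2 * ennreal (norm (g z))" by (simp add: ennreal_mult)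
        qed
        also have "\<dots> = 2 * G y" unfolding G_def
          by (rule nn_integral_cmult) (rule ennorm_meas[OF sm_cong_sets[OF L.kx(2)[OF yq], THEN iffD2, OF g]])
        also have "\<dots> = ennreal (w y)" unfolding w_def using Gy
          by (simp add: ennreal_mult ennreal_enn2real_if less_top[symmetric])
        finally show "norm (F i y) \<le> w y" by (simp add: w_def)
      qed
    qed
    have "v1 = v2" using lim1' lim2 by (rule LIMSEQ_unique)
    moreover have "kstar k h x = v2" unfolding kstar_def by (rule hbi_int[OF v2])
    ultimately show "kstar (\<lambda>x. bind (k x) l) g x = kstar k h x" using lhs by simp
  qed
qed

end

theorem proposition7p5:
  fixes p :: "'a measure" and q :: "'b measure" and r :: "'c measure"
    and k :: "'a \<Rightarrow> 'b measure" and n :: enat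
  assumes k: "mp_kernel p q k"
    and n: "n \<ge> 1"
  shows
    "(\<forall>g :: 'b \<Rightarrow> 'v::banach. strongly_measurable q g \<and> Lmem q n g \<longrightarrow>
        (AE x in p. bochner_integrable (k x) g) \<and> Lmem p n (kstar k g))
   \<and> (\<forall>g g' :: 'b \<Rightarrow> 'v. strongly_measurable q g \<and> strongly_measurable q g' \<and> Lmem q n g
        \<and> (AE y in q. g y = g' y) \<longrightarrow> (AE x in p. kstar k g x = kstar k g' x))
   \<and> (\<forall>(a::real) (b::real) (g :: 'b \<Rightarrow> 'v) h. strongly_measurable q g \<and> strongly_measurable q h
        \<and> Lmem q n g \<and> Lmem q n h \<longrightarrow>
        (AE x in p. kstar k (\<lambda>y. a *\<^sub>R g y + b *\<^sub>R h y) x = a *\<^sub>R kstar k g x + b *\<^sub>R kstar k h x))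
   \<and> (\<forall>(g :: 'b \<Rightarrow> 'v) h. strongly_measurable q g \<and> strongly_measurable q h
        \<and> Lmem q n g \<and> Lmem q n h \<longrightarrow>
        Lnorm p n (\<lambda>x. kstar k g x - kstar k h x) \<le> Lnorm q n (\<lambda>y. g y - h y))
   \<and> (\<forall>g :: 'a \<Rightarrow> 'v. strongly_measurable p g \<and> Lmem p n g \<longrightarrow>
        (AE x in p. kstar (return p) g x = g x))
   \<and> (\<forall>(l :: 'b \<Rightarrow> 'c measure) (g :: 'c \<Rightarrow> 'v) h. mp_kernel q r l \<and> strongly_measurable r g
        \<and> Lmem r n g \<and> strongly_measurable q h \<and> (AE y in q. h y = kstar l g y) \<longrightarrow>
        (AE x in p. kstar (\<lambda>x. bind (k x) l) g x = kstar k h x))"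
proof -
  interpret K: mpk p q k by (rule mpk.intro[OF k])
  have fin: "(\<integral>\<^sup>+ y. norm (g y) \<partial>q) < \<infinity>" if "strongly_measurable q g" "Lmem q n g" for g :: "'b \<Rightarrow> 'v"
    using Lmem_L1[OF K.qP that(1) n] that(2) by (simp add: Lmem_def)
  have P1: "(AE x in p. bochner_integrable (k x) g) \<and> Lmem p n (kstar k g)"
    if g: "strongly_measurable q g" and gL: "Lmem q n g" for g :: "'b \<Rightarrow> 'v"
  proof
    show "AE x in p. bochner_integrable (k x) g"
      using K.C_AE[OF g fin[OF g gL]]
    proof (rule AE_mp[OF _ AE_I2], intro impI)
      fix x assume "x \<in> space p" "(\<integral>\<^sup>+ y. ennreal (norm (g y)) \<partial>k x) < \<infinity>"
      from K.kint[OF this(1) g this(2)] show "bochner_integrable (k x) g"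
        unfolding bochner_integrable_def by blast
    qed
    have "Lnorm p n (kstar k g) \<le> Lnorm q n g" by (rule K.kstar_Lnorm[OF g fin[OF g gL] n])
    also have "\<dots> < \<infinity>" using gL by (simp add: Lmem_def)
    finally show "Lmem p n (kstar k g)"
      unfolding Lmem_def using K.kstar_aesm[OF g fin[OF g gL]] by blast
  qed
  have P2: "AE x in p. kstar k g x = kstar k g' x"
    if g: "strongly_measurable q g" and g': "strongly_measurable q g'" and gL: "Lmem q n g"
      and eq: "AE y in q. g y = g' y" for g g' :: "'b \<Rightarrow> 'v"
    using K.C_AE[OF g fin[OF g gL]] K.AE_k[OF eq]
  proof (rule AE_mp[OF _ AE_mp[OF _ AE_I2]], intro impI)
    fix x assume x: "x \<in> space p" and xf: "(\<integral>\<^sup>+ y. ennreal (norm (g y)) \<partial>k x) < \<infinity>"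
      and xe: "AE y in k x. g y = g' y"
    have "has_bochner_int (k x) g' (kstar k g x)"
      by (rule hbi_cong_AE[OF K.kint[OF x g xf] K.sm_k[OF x g'] xe])
    then show "kstar k g x = kstar k g' x" unfolding kstar_def[of k g'] by (simp add: hbi_int)
  qed
  have P3: "AE x in p. kstar k (\<lambda>y. a *\<^sub>R g y + b *\<^sub>R h y) x = a *\<^sub>R kstar k g x + b *\<^sub>R kstar k h x"
    if g: "strongly_measurable q g" and h: "strongly_measurable q h" and gL: "Lmem q n g"
      and hL: "Lmem q n h" for a b :: real and g h :: "'b \<Rightarrow> 'v"
    using K.C_AE[OF g fin[OF g gL]] K.C_AE[OF h fin[OF h hL]]
  proof (rule AE_mp[OF _ AE_mp[OF _ AE_I2]], intro impI)
    fix x assume x: "x \<in> space p" and xg: "(\<integral>\<^sup>+ y. ennreal (norm (g y)) \<partial>k x) < \<infinity>"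
      and xh: "(\<integral>\<^sup>+ y. ennreal (norm (h y)) \<partial>k x) < \<infinity>"
    have "has_bochner_int (k x) (\<lambda>y. a *\<^sub>R g y + b *\<^sub>R h y) (a *\<^sub>R kstar k g x + b *\<^sub>R kstar k h x)"
      by (rule hbi_lin[OF K.kint[OF x g xg] K.kint[OF x h xh]])
    then show "kstar k (\<lambda>y. a *\<^sub>R g y + b *\<^sub>R h y) x = a *\<^sub>R kstar k g x + b *\<^sub>R kstar k h x"
      unfolding kstar_def[of k "\<lambda>y. a *\<^sub>R g y + b *\<^sub>R h y"] by (simp add: hbi_int)
  qed
  have P4: "Lnorm p n (\<lambda>x. kstar k g x - kstar k h x) \<le> Lnorm q n (\<lambda>y. g y - h y)"
    if g: "strongly_measurable q g" and h: "strongly_measurable q h" and gL: "Lmem q n g"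
      and hL: "Lmem q n h" for g h :: "'b \<Rightarrow> 'v"
  proof -
    have d: "strongly_measurable q (\<lambda>y. g y - h y)" by (rule sm_diff[OF g h])
    have dfin: "(\<integral>\<^sup>+ y. norm (g y - h y) \<partial>q) < \<infinity>"
    proof -
      have "(\<integral>\<^sup>+ y. norm (g y - h y) \<partial>q) \<le> (\<integral>\<^sup>+ y. ennreal (norm (g y)) + ennreal (norm (h y)) \<partial>q)"
      proof (rule nn_integral_mono)
        fix y
        have "norm (g y - h y) \<le> norm (g y) + norm (h y)" by (rule norm_triangle_ineq4)
        then show "ennreal (norm (g y - h y)) \<le> ennreal (norm (g y)) + ennreal (norm (h y))"
          by (simp add: ennreal_plus[symmetric] del: ennreal_plus)
      qed
      also have "\<dots> = (\<integral>\<^sup>+ y. norm (g y) \<partial>q) + (\<integral>\<^sup>+ y. norm (h y) \<partial>q)"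
        by (rule nn_integral_add[OF ennorm_meas[OF g] ennorm_meas[OF h]])
      also have "\<dots> < \<infinity>" using fin[OF g gL] fin[OF h hL] by simp
      finally show ?thesis .
    qed
    have "AE x in p. kstar k g x - kstar k h x = kstar k (\<lambda>y. g y - h y) x"
      using K.C_AE[OF g fin[OF g gL]] K.C_AE[OF h fin[OF h hL]]
    proof (rule AE_mp[OF _ AE_mp[OF _ AE_I2]], intro impI)
      fix x assume x: "x \<in> space p" and xg: "(\<integral>\<^sup>+ y. ennreal (norm (g y)) \<partial>k x) < \<infinity>"
        and xh: "(\<integral>\<^sup>+ y. ennreal (norm (h y)) \<partial>k x) < \<infinity>"
      have "has_bochner_int (k x) (\<lambda>y. g y - h y) (kstar k g x - kstar k h x)"
        by (rule hbi_diff[OF K.kint[OF x g xg] K.kint[OF x h xh]])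
      then show "kstar k g x - kstar k h x = kstar k (\<lambda>y. g y - h y) x"
        unfolding kstar_def[of k "\<lambda>y. g y - h y"] by (simp add: hbi_int)
    qed
    then have "Lnorm p n (\<lambda>x. kstar k g x - kstar k h x) = Lnorm p n (kstar k (\<lambda>y. g y - h y))"
      by (rule Lnorm_cong_AE)
    also have "\<dots> \<le> Lnorm q n (\<lambda>y. g y - h y)" by (rule K.kstar_Lnorm[OF d dfin n])
    finally show ?thesis .
  qed
  have P5: "AE x in p. kstar (return p) g x = g x" if g: "strongly_measurable p g" for g :: "'a \<Rightarrow> 'v"
  proof (rule AE_I2)
    fix x assume x: "x \<in> space p"
    show "kstar (return p) g x = g x" unfolding kstar_def by (rule hbi_int[OF hbi_return[OF x g]])
  qed
  have P6: "AE x in p. kstar (\<lambda>x. bind (k x) l) g x = kstar k h x"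
    if l: "mp_kernel q r l" and g: "strongly_measurable r g" and gL: "Lmem r n g"
      and h: "strongly_measurable q h" and hae: "AE y in q. h y = kstar l g y"
    for l :: "'b \<Rightarrow> 'c measure" and g :: "'c \<Rightarrow> 'v" and h
  proof -
    interpret L: mpk q r l by (rule mpk.intro[OF l])
    have gfin: "(\<integral>\<^sup>+ z. norm (g z) \<partial>r) < \<infinity>"
      using Lmem_L1[OF L.qP g n] gL by (simp add: Lmem_def)
    show ?thesis by (rule K.compose[OF l g gfin h hae])
  qed
  show ?thesis
    using P1 P2 P3 P4 P5 P6 by blast
qed

end
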